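(* If $X$ has mean zero, variance one, and a density $p$ with finite Fisher information, then $$\|p-\varphi\|_{TV}\le 4\sqrt{I(X\|Z)},$$ where $\varphi$ is the standard normal density and $Z\sim N(0,1)$.
   Context: Fisher information: for $X$ with absolutely continuous density $p$, $I(X)=\int_{\{p>0\}}p'^2/p\,dx$. $I(X\|Z)=I(X)-I(Z)=I(X)-1=\int(p'/p+x)^2p\,dx$. For an absolutely continuous integrable $u$, $\|u\|_{TV}=\int|u'(x)|\,dx$. *)

theory Defs
  imports "HOL-Probability.Probability"
begin

text \<open>Local absolute continuity on the real line, with a.e. derivative u':
  u' is integrable on every compact interval and u is its indefinite integral
  (Lebesgue's fundamental theorem of calculus characterisation).\<close>
definition ac_with_deriv :: "(real \<Rightarrow> real) \<Rightarrow> (real \<Rightarrow> real) \<Rightarrow> bool" where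
  "ac_with_deriv u u' \<longleftrightarrow>
     (\<forall>a b. set_integrable lborel {a..b} u') \<and>
     (\<forall>a b. a \<le> b \<longrightarrow> u b - u a = (LINT t:{a..b}|lborel. u' t))"

definition fisher_info :: "(real \<Rightarrow> real) \<Rightarrow> (real \<Rightarrow> real) \<Rightarrow> real" where
  "fisher_info p p' = (LINT x:{x. p x > 0}|lborel. (p' x)\<^sup>2 / p x)"

definition finite_fisher_info :: "(real \<Rightarrow> real) \<Rightarrow> (real \<Rightarrow> real) \<Rightarrow> bool" where
  "finite_fisher_info p p' \<longleftrightarrow> set_integrable lborel {x. p x > 0} (\<lambda>x. (p' x)\<^sup>2 / p x)"

text \<open>Total variation norm of an absolutely continuous integrable u with derivative u':
  the integral of |u'|; finiteness is expressed by integrability of u'.\<close>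
definition tv_norm :: "(real \<Rightarrow> real) \<Rightarrow> real" where
  "tv_norm u' = (LINT x|lborel. \<bar>u' x\<bar>)"

definition std_normal_density' :: "real \<Rightarrow> real" where
  "std_normal_density' x = - x * std_normal_density x"

end

theory Submission
  imports Defs
begin

lemma set_integral_combine:
  fixes f :: "real \<Rightarrow> real"
  assumes "set_integrable lborel {a..b} f" "a \<le> x" "x \<le> y" "y \<le> b"
  shows "(LINT t:{a..y}|lborel. f t) = (LINT t:{a..x}|lborel. f t) + (LINT t:{x..y}|lborel. f t)"
proof -
  have i: "set_integrable lborel {c..d} f" if "a \<le> c" "d \<le> b" for c d
    by (rule set_integrable_subset[OF assms(1)]) (use that in auto)
  have "f integrable_on {a..y}" using set_borel_integral_eq_integral(1)[OF i] assms by auto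
  then show ?thesis using assms
    using Henstock_Kurzweil_Integration.integral_combine[where a=a and c=x and b=y and f=f]
    by (simp add: set_borel_integral_eq_integral(2)[OF i])
qed

lemma meas_of_local_int:
  fixes f :: "real \<Rightarrow> real"
  assumes "\<And>a b. set_integrable lborel {a..b} f"
  shows "f \<in> borel_measurable lborel"
proof (rule borel_measurable_LIMSEQ_real)
  show "(\<lambda>n. indicator {-real n..real n} x * f x) \<longlonglongrightarrow> f x" for x
  proof (rule tendsto_eventually)
    obtain N :: nat where "\<bar>x\<bar> \<le> real N" using real_arch_simple by blast
    then show "\<forall>\<^sub>F n in sequentially. indicator {-real n..real n} x * f x = f x"
      unfolding eventually_sequentially
      by (intro exI[of _ N]) (auto simp: indicator_def)
  qed
  show "(\<lambda>x. indicator {-real n..real n} x * f x) \<in> borel_measurable lborel" for n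
    using assms[of "-real n" "real n"] unfolding set_integrable_def
    by (simp add: borel_measurable_integrable mult.commute)
qed

lemma si_mult_bounded:
  fixes f h :: "real \<Rightarrow> real"
  assumes "set_integrable lborel S f" "h \<in> borel_measurable lborel" "\<And>x. x \<in> S \<Longrightarrow> \<bar>h x\<bar> \<le> B"
  shows "set_integrable lborel S (\<lambda>x. f x * h x)"
proof (rule set_integrable_bound[where f="\<lambda>x. B * f x"])
  show "set_integrable lborel S (\<lambda>x. B * f x)" using assms(1) by (rule set_integrable_mult_right)
  have "(\<lambda>x. indicator S x *\<^sub>R f x) \<in> borel_measurable lborel"
    using assms(1) unfolding set_integrable_def by (rule borel_measurable_integrable)
  then have "(\<lambda>x. (indicator S x *\<^sub>R f x) * h x) \<in> borel_measurable lborel"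
    using assms(2) by measurable
  then show "set_borel_measurable lborel S (\<lambda>x. f x * h x)"
    unfolding set_borel_measurable_def by (simp add: mult.assoc)
  show "AE x\<in>S in lborel. norm (f x * h x) \<le> norm (B * f x)"
  proof (rule AE_I2, rule impI)
    fix x assume "x \<in> S"
    then have "\<bar>h x\<bar> \<le> \<bar>B\<bar>" using assms(3) by (meson abs_ge_self order_trans)
    then show "norm (f x * h x) \<le> norm (B * f x)"
      by (simp add: abs_mult) (metis abs_ge_zero mult.commute mult_left_mono)
  qed
qed
lemma ac_int: "ac_with_deriv u u' \<Longrightarrow> set_integrable lborel {a..b} u'"
  unfolding ac_with_deriv_def by blast

lemma ac_eq: "ac_with_deriv u u' \<Longrightarrow> a \<le> b \<Longrightarrow> u b - u a = (LINT t:{a..b}|lborel. u' t)"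
  unfolding ac_with_deriv_def by blast

lemma ac_meas: "ac_with_deriv u u' \<Longrightarrow> u' \<in> borel_measurable lborel"
  by (rule meas_of_local_int) (rule ac_int)

lemma ac_HK:
  assumes "ac_with_deriv u u'" "a \<le> b"
  shows "u' integrable_on {a..b}" "u b - u a = integral {a..b} u'"
  using set_borel_integral_eq_integral[OF ac_int[OF assms(1)]] ac_eq[OF assms] by auto

lemma ac_cont:
  assumes "ac_with_deriv u u'"
  shows "isCont u x"
proof -
  define a where "a = x - 1"
  define b where "b = x + 1"
  have i: "u' integrable_on {a..b}" using ac_HK[OF assms, of a b] by (auto simp: a_def b_def)
  have eq: "u a + integral {a..t} u' = u t" if "t \<in> {a..b}" for t
    using ac_HK(2)[OF assms, of a t] that by auto
  have "continuous_on {a..b} (\<lambda>t. u a + integral {a..t} u')"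
    by (intro continuous_intros indefinite_integral_continuous_1 i)
  then have c: "continuous_on {a..b} u" by (rule continuous_on_eq) (simp add: eq)
  have "x \<in> interior {a..b}" by (simp add: a_def b_def)
  then show ?thesis by (rule continuous_on_interior[OF c])
qed

lemma ac_cont_on: "ac_with_deriv u u' \<Longrightarrow> continuous_on S u"
  by (simp add: ac_cont continuous_at_imp_continuous_on)

lemma zero_var:
  fixes \<Phi> V :: "real \<Rightarrow> real"
  assumes ab: "a \<le> b"
    and loc: "\<And>e. e > 0 \<Longrightarrow> \<exists>d>0. \<forall>x y. a \<le> x \<longrightarrow> x \<le> y \<longrightarrow> y \<le> b \<longrightarrow> y - x < d \<longrightarrow>
                 \<bar>\<Phi> y - \<Phi> x\<bar> \<le> e * (V y - V x + (y - x))"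
  shows "\<Phi> b = \<Phi> a"
proof -
  define C where "C = V b - V a + (b - a)"
  have bound: "\<bar>\<Phi> b - \<Phi> a\<bar> \<le> e * C" if e: "e > 0" for e
  proof -
    obtain d where d: "d > 0" and dl: "\<forall>x y. a \<le> x \<longrightarrow> x \<le> y \<longrightarrow> y \<le> b \<longrightarrow> y - x < d \<longrightarrow>
                 \<bar>\<Phi> y - \<Phi> x\<bar> \<le> e * (V y - V x + (y - x))" using loc[OF e] by blast
    obtain n :: nat where n: "(b - a) / d < real n" using reals_Archimedean2 by blast
    then have npos: "n > 0" using ab d
      by (metis divide_nonneg_pos gr_zeroI not_less of_nat_0 diff_ge_0_iff_ge)
    define h where "h = (b - a) / n"
    have h0: "h \<ge> 0" using ab npos by (simp add: h_def)
    have hd: "h < d" using n d npos by (simp add: h_def field_simps)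
    have hn: "a + real n * h = b" using npos by (simp add: h_def)
    have ind: "\<bar>\<Phi> (a + real k * h) - \<Phi> a\<bar> \<le> e * (V (a + real k * h) - V a + real k * h)" if "k \<le> n" for k
      using that
    proof (induction k)
      case 0 then show ?case by simp
    next
      case (Suc k)
      let ?x = "a + real k * h" and ?y = "a + real (Suc k) * h"
      have le: "real (Suc k) * h \<le> real n * h" using Suc.prems h0 by (intro mult_right_mono) auto
      have x1: "a \<le> ?x" using h0 by simp
      have x2: "?x \<le> ?y" using h0 by (simp add: algebra_simps)
      have x3: "?y \<le> b" using le hn by linarith
      have x4: "?y - ?x < d" using hd by (simp add: algebra_simps)
      have yx: "?y - ?x = h" by (simp add: algebra_simps)
      have A: "\<bar>\<Phi> ?y - \<Phi> ?x\<bar> \<le> e * (V ?y - V ?x + (?y - ?x))"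
        by (rule dl[rule_format, OF x1 x2 x3 x4])
      then have A': "\<bar>\<Phi> ?y - \<Phi> ?x\<bar> \<le> e * (V ?y - V ?x + h)" by (simp only: yx)
      have B: "\<bar>\<Phi> ?x - \<Phi> a\<bar> \<le> e * (V ?x - V a + real k * h)" using Suc by simp
      have T: "\<bar>\<Phi> ?y - \<Phi> a\<bar> \<le> \<bar>\<Phi> ?y - \<Phi> ?x\<bar> + \<bar>\<Phi> ?x - \<Phi> a\<bar>"
        using abs_triangle_ineq[of "\<Phi> ?y - \<Phi> ?x" "\<Phi> ?x - \<Phi> a"] by simp
      have "\<bar>\<Phi> ?y - \<Phi> a\<bar> \<le> e * (V ?y - V ?x + h) + e * (V ?x - V a + real k * h)"
        using T A' B by linarith
      also have "\<dots> = e * (V ?y - V a + real (Suc k) * h)" by (simp add: algebra_simps)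
      finally show ?case .
    qed
    have hn2: "real n * h = b - a" using hn by simp
    from ind[of n] show ?thesis using hn2 by (simp add: hn C_def)
  qed
  show ?thesis
  proof (cases "C > 0")
    case True
    have "\<bar>\<Phi> b - \<Phi> a\<bar> \<le> 0"
    proof (rule field_le_epsilon)
      fix e :: real assume "e > 0"
      then show "\<bar>\<Phi> b - \<Phi> a\<bar> \<le> 0 + e" using bound[of "e / C"] True by simp
    qed
    then show ?thesis by simp
  next
    case False
    then have "\<bar>\<Phi> b - \<Phi> a\<bar> \<le> 0" using bound[of 1] by simp
    then show ?thesis by simp
  qed
qed
lemma cont_bound:
  fixes f :: "real \<Rightarrow> real"
  assumes "continuous_on {a..b} f"
  shows "\<exists>B. \<forall>x\<in>{a..b}. \<bar>f x\<bar> \<le> B"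
proof -
  have "bounded (f ` {a..b})" by (intro compact_imp_bounded compact_continuous_image assms) simp
  then obtain B where "\<forall>y\<in>f ` {a..b}. norm y \<le> B" by (auto simp: bounded_iff)
  then show ?thesis by auto
qed

lemma si_mult_cont:
  fixes f h :: "real \<Rightarrow> real"
  assumes "set_integrable lborel {a..b} f" "continuous_on UNIV h"
  shows "set_integrable lborel {a..b} (\<lambda>x. f x * h x)" "set_integrable lborel {a..b} (\<lambda>x. h x * f x)"
proof -
  obtain B where B: "\<forall>x\<in>{a..b}. \<bar>h x\<bar> \<le> B"
    using cont_bound[of a b h] assms(2) continuous_on_subset by blast
  have m: "h \<in> borel_measurable lborel" using assms(2) by (simp add: borel_measurable_continuous_onI)
  show 1: "set_integrable lborel {a..b} (\<lambda>x. f x * h x)"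
    by (rule si_mult_bounded[OF assms(1) m, of B]) (use B in auto)
  show "set_integrable lborel {a..b} (\<lambda>x. h x * f x)"
    using 1 by (simp add: mult.commute)
qed

lemma si_HK:
  fixes f :: "real \<Rightarrow> real"
  assumes "\<And>c d. set_integrable lborel {c..d} f"
  shows "f integrable_on {c..d}" "(\<lambda>x. \<bar>f x\<bar>) integrable_on {c..d}"
    "(LINT t:{c..d}|lborel. f t) = integral {c..d} f"
  using set_borel_integral_eq_integral[OF assms] set_borel_integral_eq_integral[OF set_integrable_abs[OF assms]]
  by auto

lemma unif_cont_real:
  fixes u :: "real \<Rightarrow> real"
  assumes "continuous_on {a..b} u" "e > 0"
  shows "\<exists>d>0. \<forall>s\<in>{a..b}. \<forall>t\<in>{a..b}. \<bar>s - t\<bar> < d \<longrightarrow> \<bar>u s - u t\<bar> \<le> e"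
proof -
  have "uniformly_continuous_on {a..b} u" by (rule compact_uniformly_continuous[OF assms(1)]) simp
  then obtain d where "d > 0" "\<forall>s\<in>{a..b}. \<forall>t\<in>{a..b}. dist s t < d \<longrightarrow> dist (u s) (u t) < e"
    unfolding uniformly_continuous_on_def using assms(2) by metis
  then show ?thesis by (auto simp: dist_real_def intro!: exI[of _ d] less_imp_le)
qed

lemma ac_mult:
  assumes u: "ac_with_deriv u u'" and v: "ac_with_deriv v v'"
  shows "ac_with_deriv (\<lambda>x. u x * v x) (\<lambda>x. u' x * v x + u x * v' x)"
proof -
  have cu: "continuous_on UNIV u" and cv: "continuous_on UNIV v" using u v by (auto intro: ac_cont_on)
  let ?w = "\<lambda>x. u' x * v x + u x * v' x"
  have iuv: "set_integrable lborel {c..d} (\<lambda>x. u' x * v x)" for c d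
    using si_mult_cont(1)[OF ac_int[OF u] cv] .
  have ivu: "set_integrable lborel {c..d} (\<lambda>x. u x * v' x)" for c d
    using si_mult_cont(2)[OF ac_int[OF v] cu] .
  have iw: "set_integrable lborel {c..d} ?w" for c d
    by (rule set_integral_add(1)[OF iuv ivu])
  have iu': "set_integrable lborel {c..d} u'" for c d using u by (rule ac_int)
  have iv': "set_integrable lborel {c..d} v'" for c d using v by (rule ac_int)
  have iV: "set_integrable lborel {c..d} (\<lambda>t. \<bar>u' t\<bar> + \<bar>v' t\<bar>)" for c d
    by (intro set_integral_add(1) set_integrable_abs iu' iv')
  note HKw = si_HK[OF iw] and HKu = si_HK[OF iu'] and HKv = si_HK[OF iv'] and HKuv = si_HK[OF iuv]
    and HKvu = si_HK[OF ivu] and HKV = si_HK[OF iV]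
  have main: "u b * v b - u a * v a = integral {a..b} ?w" if ab: "a \<le> b" for a b
  proof -
    define \<Phi> where "\<Phi> t = u t * v t - integral {a..t} ?w" for t
    define V where "V t = integral {a..t} (\<lambda>t. \<bar>u' t\<bar> + \<bar>v' t\<bar>)" for t
    have "\<Phi> b = \<Phi> a"
    proof (rule zero_var[OF ab, where V=V])
      fix e :: real assume e: "e > 0"
      obtain d1 where d1: "d1 > 0" "\<forall>s\<in>{a..b}. \<forall>t\<in>{a..b}. \<bar>s - t\<bar> < d1 \<longrightarrow> \<bar>u s - u t\<bar> \<le> e"
        using unif_cont_real[OF continuous_on_subset[OF cu] e] by blast
      obtain d2 where d2: "d2 > 0" "\<forall>s\<in>{a..b}. \<forall>t\<in>{a..b}. \<bar>s - t\<bar> < d2 \<longrightarrow> \<bar>v s - v t\<bar> \<le> e"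
        using unif_cont_real[OF continuous_on_subset[OF cv] e] by blast
      show "\<exists>d>0. \<forall>x y. a \<le> x \<longrightarrow> x \<le> y \<longrightarrow> y \<le> b \<longrightarrow> y - x < d \<longrightarrow>
                 \<bar>\<Phi> y - \<Phi> x\<bar> \<le> e * (V y - V x + (y - x))"
      proof (intro exI[of _ "min d1 d2"] conjI allI impI)
        show "min d1 d2 > 0" using d1 d2 by simp
        fix x y assume xy: "a \<le> x" "x \<le> y" "y \<le> b" "y - x < min d1 d2"
        have Vd: "V y - V x = integral {x..y} (\<lambda>t. \<bar>u' t\<bar> + \<bar>v' t\<bar>)"
          unfolding V_def using Henstock_Kurzweil_Integration.integral_combine[OF xy(1,2) HKV(1)] by simp
        have wd: "integral {a..y} ?w - integral {a..x} ?w = integral {x..y} ?w"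
          using Henstock_Kurzweil_Integration.integral_combine[OF xy(1,2) HKw(1)] by simp
        have ud: "u y - u x = integral {x..y} u'" using ac_HK(2)[OF u xy(2)] .
        have vd: "v y - v x = integral {x..y} v'" using ac_HK(2)[OF v xy(2)] .
        have split: "integral {x..y} ?w = integral {x..y} (\<lambda>t. u' t * v t) + integral {x..y} (\<lambda>t. u t * v' t)"
          by (rule integral_add[OF HKuv(1) HKvu(1)])
        have e1: "integral {x..y} (\<lambda>t. u' t * (v y - v t)) = v y * integral {x..y} u' - integral {x..y} (\<lambda>t. u' t * v t)"
        proof -
          have "integral {x..y} (\<lambda>t. u' t * (v y - v t)) = integral {x..y} (\<lambda>t. v y * u' t - u' t * v t)"
            by (simp add: algebra_simps)
          also have "\<dots> = integral {x..y} (\<lambda>t. v y * u' t) - integral {x..y} (\<lambda>t. u' t * v t)"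
            by (rule integral_diff[OF integrable_on_mult_right[OF HKu(1)] HKuv(1)])
          finally show ?thesis by simp
        qed
        have e2: "integral {x..y} (\<lambda>t. v' t * (u x - u t)) = u x * integral {x..y} v' - integral {x..y} (\<lambda>t. u t * v' t)"
        proof -
          have "integral {x..y} (\<lambda>t. v' t * (u x - u t)) = integral {x..y} (\<lambda>t. u x * v' t - u t * v' t)"
            by (simp add: algebra_simps)
          also have "\<dots> = integral {x..y} (\<lambda>t. u x * v' t) - integral {x..y} (\<lambda>t. u t * v' t)"
            by (rule integral_diff[OF integrable_on_mult_right[OF HKv(1)] HKvu(1)])
          finally show ?thesis by simp
        qed
        have key: "\<Phi> y - \<Phi> x = integral {x..y} (\<lambda>t. u' t * (v y - v t)) + integral {x..y} (\<lambda>t. v' t * (u x - u t))"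
        proof -
          have "\<Phi> y - \<Phi> x = u y * v y - u x * v x - integral {x..y} ?w"
            unfolding \<Phi>_def using wd by simp
          also have "u y * v y - u x * v x = v y * (u y - u x) + u x * (v y - v x)" by (simp add: algebra_simps)
          finally show ?thesis using e1 e2 split ud vd by simp
        qed
        have b1: "norm (integral {x..y} (\<lambda>t. u' t * (v y - v t))) \<le> integral {x..y} (\<lambda>t. e * \<bar>u' t\<bar>)"
        proof (rule integral_norm_bound_integral)
          show "(\<lambda>t. u' t * (v y - v t)) integrable_on {x..y}"
            using integrable_diff[OF integrable_on_mult_right[OF HKu(1), of "v y"] HKuv(1)]
            by (simp add: algebra_simps)
          show "(\<lambda>t. e * \<bar>u' t\<bar>) integrable_on {x..y}" by (rule integrable_on_mult_right[OF HKu(2)])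
          fix t assume t: "t \<in> {x..y}"
          have "\<bar>v y - v t\<bar> \<le> e" using d2(2) t xy by auto
          then show "norm (u' t * (v y - v t)) \<le> e * \<bar>u' t\<bar>"
            by (simp add: abs_mult) (metis abs_ge_zero mult.commute mult_left_mono)
        qed
        have b2: "norm (integral {x..y} (\<lambda>t. v' t * (u x - u t))) \<le> integral {x..y} (\<lambda>t. e * \<bar>v' t\<bar>)"
        proof (rule integral_norm_bound_integral)
          show "(\<lambda>t. v' t * (u x - u t)) integrable_on {x..y}"
            using integrable_diff[OF integrable_on_mult_right[OF HKv(1), of "u x"] HKvu(1)]
            by (simp add: algebra_simps)
          show "(\<lambda>t. e * \<bar>v' t\<bar>) integrable_on {x..y}" by (rule integrable_on_mult_right[OF HKv(2)])
          fix t assume t: "t \<in> {x..y}"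
          have "\<bar>u x - u t\<bar> \<le> e" using d1(2) t xy by auto
          then show "norm (v' t * (u x - u t)) \<le> e * \<bar>v' t\<bar>"
            by (simp add: abs_mult) (metis abs_ge_zero mult.commute mult_left_mono)
        qed
        have sumI: "integral {x..y} (\<lambda>t. e * \<bar>u' t\<bar>) + integral {x..y} (\<lambda>t. e * \<bar>v' t\<bar>) = e * (V y - V x)"
          unfolding Vd using integral_add[OF HKu(2) HKv(2), of x y]
          by (simp add: distrib_left integral_mult_right)
        have "\<bar>\<Phi> y - \<Phi> x\<bar> \<le> e * (V y - V x)"
          using key b1[unfolded real_norm_def] b2[unfolded real_norm_def] sumI by (smt (verit))
        moreover have "e * (V y - V x) \<le> e * (V y - V x + (y - x))" using e xy by simp
        ultimately show "\<bar>\<Phi> y - \<Phi> x\<bar> \<le> e * (V y - V x + (y - x))" by linarith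
      qed
    qed
    then show ?thesis by (simp add: \<Phi>_def)
  qed
  show ?thesis unfolding ac_with_deriv_def
    using iw main HKw(3) by auto
qed
lemma ac_add:
  assumes "ac_with_deriv u u'" "ac_with_deriv v v'"
  shows "ac_with_deriv (\<lambda>x. u x + v x) (\<lambda>x. u' x + v' x)"
  using assms unfolding ac_with_deriv_def
  by (auto simp: set_integral_add(2) algebra_simps intro!: set_integral_add(1))

lemma ac_cmult:
  assumes "ac_with_deriv u u'"
  shows "ac_with_deriv (\<lambda>x. c * u x) (\<lambda>x. c * u' x)"
  using assms unfolding ac_with_deriv_def
  by (auto simp: set_integral_mult_right right_diff_distrib[symmetric] intro!: set_integrable_mult_right)

lemma ac_smooth:
  assumes d: "\<And>x. (g has_real_derivative g' x) (at x)" and c: "continuous_on UNIV g'"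
  shows "ac_with_deriv g g'"
  unfolding ac_with_deriv_def
proof (intro conjI allI impI)
  fix a b :: real
  show "set_integrable lborel {a..b} g'"
    by (rule borel_integrable_atLeastAtMost'[OF continuous_on_subset[OF c]]) simp
  assume ab: "a \<le> b"
  have "integral\<^sup>L lborel (\<lambda>x. indicator {a .. b} x *\<^sub>R g' x) = g b - g a"
  proof (rule integral_FTC_atLeastAtMost[OF ab])
    show "(g has_vector_derivative g' x) (at x within {a..b})" for x
      using has_field_derivative_at_within[OF d] by (simp add: has_real_derivative_iff_has_vector_derivative)
    show "continuous_on {a..b} g'" by (rule continuous_on_subset[OF c]) simp
  qed
  then show "g b - g a = (LINT t:{a..b}|lborel. g' t)"
    by (simp add: set_lebesgue_integral_def)
qed

lemma mvt_between:
  fixes F F' :: "real \<Rightarrow> real"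
  assumes F: "\<And>y. y > c \<Longrightarrow> (F has_real_derivative F' y) (at y)" and pq: "p > c" "q > c"
  shows "\<exists>\<xi>. min p q \<le> \<xi> \<and> \<xi> \<le> max p q \<and> F q - F p = (q - p) * F' \<xi>"
proof -
  consider "p < q" | "q < p" | "p = q" by linarith
  then show ?thesis
  proof cases
    case 1
    obtain z where "z > p" "z < q" "F q - F p = (q - p) * F' z"
      using MVT2[OF 1, of F F'] F pq by force
    then show ?thesis by (intro exI[of _ z]) auto
  next
    case 2
    obtain z where "z > q" "z < p" "F p - F q = (p - q) * F' z"
      using MVT2[OF 2, of F F'] F pq by force
    then show ?thesis by (intro exI[of _ z]) (auto simp: algebra_simps)
  next
    case 3 then show ?thesis by (intro exI[of _ p]) auto
  qed
qed

lemma between_close: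
  fixes p q z r d :: real
  assumes "min p q \<le> z" "z \<le> max p q" "\<bar>p - r\<bar> \<le> d" "\<bar>q - r\<bar> \<le> d"
  shows "\<bar>z - r\<bar> \<le> d"
proof -
  have "p - r \<le> d" "r - p \<le> d" "q - r \<le> d" "r - q \<le> d" using assms(3,4) by (auto simp: abs_le_iff)
  then show ?thesis using assms(1,2) unfolding abs_le_iff min_def max_def by (auto split: if_splits)
qed

lemma ac_chain:
  fixes F F' :: "real \<Rightarrow> real"
  assumes u: "ac_with_deriv u u'"
    and F: "\<And>y. y > c \<Longrightarrow> (F has_real_derivative F' y) (at y)"
    and cF: "continuous_on {c<..} F'" and pos: "\<And>t. u t > c"
  shows "ac_with_deriv (\<lambda>t. F (u t)) (\<lambda>t. F' (u t) * u' t)"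
proof -
  have cu: "continuous_on UNIV u" using u by (rule ac_cont_on)
  have cFu: "continuous_on UNIV (\<lambda>t. F' (u t))"
    by (rule continuous_on_compose2[OF cF cu]) (use pos in auto)
  let ?w = "\<lambda>t. F' (u t) * u' t"
  have iu': "set_integrable lborel {c..d} u'" for c d using u by (rule ac_int)
  have iw: "set_integrable lborel {c..d} ?w" for c d
    using si_mult_cont(2)[OF iu' cFu] .
  note HKw = si_HK[OF iw] and HKu = si_HK[OF iu']
  have main: "F (u b) - F (u a) = integral {a..b} ?w" if ab: "a \<le> b" for a b
  proof -
    define \<Phi> where "\<Phi> t = F (u t) - integral {a..t} ?w" for t
    define V where "V t = integral {a..t} (\<lambda>t. \<bar>u' t\<bar>)" for t
    define K where "K = u ` {a..b}"
    have cK: "compact K" unfolding K_def by (intro compact_continuous_image continuous_on_subset[OF cu]) auto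
    have conK: "connected K" unfolding K_def by (intro connected_continuous_image continuous_on_subset[OF cu]) auto
    have Kc: "K \<subseteq> {c<..}" using pos unfolding K_def by auto
    have ucK: "uniformly_continuous_on K F'"
      by (rule compact_uniformly_continuous[OF continuous_on_subset[OF cF Kc] cK])
    have "\<Phi> b = \<Phi> a"
    proof (rule zero_var[OF ab, where V=V])
      fix e :: real assume e: "e > 0"
      obtain d1 where d1: "d1 > 0" "\<forall>s\<in>K. \<forall>t\<in>K. dist s t < d1 \<longrightarrow> dist (F' s) (F' t) < e"
        using ucK e unfolding uniformly_continuous_on_def by metis
      have hd1: "d1 / 2 > 0" using d1 by simp
      obtain d2 where d2: "d2 > 0" "\<forall>s\<in>{a..b}. \<forall>t\<in>{a..b}. \<bar>s - t\<bar> < d2 \<longrightarrow> \<bar>u s - u t\<bar> \<le> d1 / 2"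
        using unif_cont_real[OF continuous_on_subset[OF cu] hd1] by blast
      show "\<exists>d>0. \<forall>x y. a \<le> x \<longrightarrow> x \<le> y \<longrightarrow> y \<le> b \<longrightarrow> y - x < d \<longrightarrow>
                 \<bar>\<Phi> y - \<Phi> x\<bar> \<le> e * (V y - V x + (y - x))"
      proof (intro exI[of _ d2] conjI allI impI)
        show "d2 > 0" using d2 by simp
        fix x y assume xy: "a \<le> x" "x \<le> y" "y \<le> b" "y - x < d2"
        obtain \<xi> where xi: "min (u x) (u y) \<le> \<xi>" "\<xi> \<le> max (u x) (u y)"
          "F (u y) - F (u x) = (u y - u x) * F' \<xi>"
          using mvt_between[OF F pos pos] by blast
        have uxK: "u x \<in> K" "u y \<in> K" using xy unfolding K_def by auto
        have xiK: "\<xi> \<in> K"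
        proof (cases "u x \<le> u y")
          case True
          then show ?thesis using connectedD_interval[OF conK uxK(1) uxK(2)] xi by auto
        next
          case False
          then show ?thesis using connectedD_interval[OF conK uxK(2) uxK(1)] xi by auto
        qed
        have Vd: "V y - V x = integral {x..y} (\<lambda>t. \<bar>u' t\<bar>)"
          unfolding V_def using Henstock_Kurzweil_Integration.integral_combine[OF xy(1,2) HKu(2)] by simp
        have wd: "integral {a..y} ?w - integral {a..x} ?w = integral {x..y} ?w"
          using Henstock_Kurzweil_Integration.integral_combine[OF xy(1,2) HKw(1)] by simp
        have ud: "u y - u x = integral {x..y} u'" using ac_HK(2)[OF u xy(2)] .
        have key: "\<Phi> y - \<Phi> x = integral {x..y} (\<lambda>t. u' t * (F' \<xi> - F' (u t)))"
        proof -
          have "integral {x..y} (\<lambda>t. u' t * (F' \<xi> - F' (u t))) = integral {x..y} (\<lambda>t. F' \<xi> * u' t - ?w t)"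
            by (simp add: algebra_simps)
          also have "\<dots> = integral {x..y} (\<lambda>t. F' \<xi> * u' t) - integral {x..y} ?w"
            by (rule integral_diff[OF integrable_on_mult_right[OF HKu(1)] HKw(1)])
          also have "\<dots> = F' \<xi> * (u y - u x) - integral {x..y} ?w" using ud by simp
          finally show ?thesis unfolding \<Phi>_def using wd xi(3) by (simp add: algebra_simps)
        qed
        have b1: "norm (integral {x..y} (\<lambda>t. u' t * (F' \<xi> - F' (u t)))) \<le> integral {x..y} (\<lambda>t. e * \<bar>u' t\<bar>)"
        proof (rule integral_norm_bound_integral)
          show "(\<lambda>t. u' t * (F' \<xi> - F' (u t))) integrable_on {x..y}"
            using integrable_diff[OF integrable_on_mult_right[OF HKu(1), of "F' \<xi>"] HKw(1)]
            by (simp add: algebra_simps)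
          show "(\<lambda>t. e * \<bar>u' t\<bar>) integrable_on {x..y}" by (rule integrable_on_mult_right[OF HKu(2)])
          fix t assume t: "t \<in> {x..y}"
          have utK: "u t \<in> K" using t xy unfolding K_def by auto
          have h1: "\<bar>u x - u t\<bar> \<le> d1 / 2" "\<bar>u y - u t\<bar> \<le> d1 / 2" using d2(2) t xy by auto
          have "\<bar>\<xi> - u t\<bar> \<le> d1 / 2" by (rule between_close[OF xi(1,2) h1])
          then have "\<bar>\<xi> - u t\<bar> < d1" using d1(1) by linarith
          then have "\<bar>F' \<xi> - F' (u t)\<bar> < e" using d1(2) xiK utK by (simp add: dist_real_def)
          then have "\<bar>F' \<xi> - F' (u t)\<bar> \<le> e" by simp
          then show "norm (u' t * (F' \<xi> - F' (u t))) \<le> e * \<bar>u' t\<bar>"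
            by (simp add: abs_mult) (metis abs_ge_zero mult.commute mult_left_mono)
        qed
        have "\<bar>\<Phi> y - \<Phi> x\<bar> \<le> e * (V y - V x)"
          using key b1 Vd by (simp add: integral_mult_right)
        moreover have "e * (V y - V x) \<le> e * (V y - V x + (y - x))" using e xy by simp
        ultimately show "\<bar>\<Phi> y - \<Phi> x\<bar> \<le> e * (V y - V x + (y - x))" by linarith
      qed
    qed
    then show ?thesis by (simp add: \<Phi>_def)
  qed
  show ?thesis unfolding ac_with_deriv_def
    using iw main HKw(3) by auto
qed

lemma si_of_int:
  fixes f :: "real \<Rightarrow> real"
  shows "integrable lborel f \<Longrightarrow> A \<in> sets borel \<Longrightarrow> set_integrable lborel A f"
  unfolding set_integrable_def by (rule integrable_mult_indicator) auto

lemma lint_sym_lim: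
  fixes f :: "real \<Rightarrow> real"
  assumes f: "integrable lborel f"
  shows "(\<lambda>n::nat. LINT x:{-real n..real n}|lborel. f x) \<longlonglongrightarrow> integral\<^sup>L lborel f"
  unfolding set_lebesgue_integral_def
proof (rule integral_dominated_convergence[where w="\<lambda>x. norm (f x)"])
  show "f \<in> borel_measurable lborel" using f by auto
  show "(\<lambda>x. indicator {-real i..real i} x *\<^sub>R f x) \<in> borel_measurable lborel" for i using f by auto
  show "integrable lborel (\<lambda>x. norm (f x))" using f by auto
  show "AE x in lborel. norm (indicator {-real i..real i} x *\<^sub>R f x) \<le> norm (f x)" for i
    by (auto simp: indicator_def)
  show "AE x in lborel. (\<lambda>i. indicator {-real i..real i} x *\<^sub>R f x) \<longlonglongrightarrow> f x"
  proof (rule AE_I2, rule tendsto_eventually)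
    fix x :: real
    obtain N :: nat where "\<bar>x\<bar> \<le> real N" using real_arch_simple by blast
    then show "\<forall>\<^sub>F n in sequentially. indicator {-real n..real n} x *\<^sub>R f x = f x"
      unfolding eventually_sequentially
      by (intro exI[of _ N]) (auto simp: indicator_def)
  qed
qed

lemma ac_lim_top:
  assumes u: "ac_with_deriv u u'" and i': "integrable lborel u'"
  shows "(u \<longlongrightarrow> u 0 + (LINT t:{0..}|lborel. u' t)) at_top"
proof -
  have si: "set_integrable lborel {0..} u'"
    using i' by (rule si_of_int) simp
  have "((\<lambda>b. LINT t:{0..b}|lborel. u' t) \<longlongrightarrow> (LINT t:{0..}|lborel. u' t)) at_top"
    by (rule tendsto_set_lebesgue_integral_at_top[OF _ si]) simp
  then have "((\<lambda>b. u 0 + (LINT t:{0..b}|lborel. u' t)) \<longlongrightarrow> u 0 + (LINT t:{0..}|lborel. u' t)) at_top"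
    by (intro tendsto_add tendsto_const)
  moreover have "\<forall>\<^sub>F b in at_top. u 0 + (LINT t:{0..b}|lborel. u' t) = u b"
    using eventually_ge_at_top[of "0::real"] by eventually_elim (use ac_eq[OF u] in force)
  ultimately show ?thesis by (rule Lim_transform_eventually)
qed

lemma ac_lim_bot:
  assumes u: "ac_with_deriv u u'" and i': "integrable lborel u'"
  shows "(u \<longlongrightarrow> u 0 - (LINT t:{..0}|lborel. u' t)) at_bot"
proof -
  have si: "set_integrable lborel {..0} u'"
    using i' by (rule si_of_int) simp
  have "((\<lambda>a. LINT t:{a..0}|lborel. u' t) \<longlongrightarrow> (LINT t:{..0}|lborel. u' t)) at_bot"
    by (rule tendsto_set_lebesgue_integral_at_bot[OF _ si]) simp
  then have "((\<lambda>a. u 0 - (LINT t:{a..0}|lborel. u' t)) \<longlongrightarrow> u 0 - (LINT t:{..0}|lborel. u' t)) at_bot"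
    by (intro tendsto_diff tendsto_const)
  moreover have "\<forall>\<^sub>F a in at_bot. u 0 - (LINT t:{a..0}|lborel. u' t) = u a"
    using eventually_le_at_bot[of "0::real"] by eventually_elim (use ac_eq[OF u] in force)
  ultimately show ?thesis by (rule Lim_transform_eventually)
qed

lemma lim_top_integrable_zero:
  fixes u :: "real \<Rightarrow> real"
  assumes lim: "(u \<longlongrightarrow> L) at_top" and int: "integrable lborel u"
  shows "L = 0"
proof (rule ccontr)
  assume L: "L \<noteq> 0"
  have "((\<lambda>x. \<bar>u x\<bar>) \<longlongrightarrow> \<bar>L\<bar>) at_top" by (rule tendsto_rabs[OF lim])
  moreover have "\<bar>L\<bar> / 2 < \<bar>L\<bar>" using L by simp
  ultimately have "\<forall>\<^sub>F x in at_top. \<bar>L\<bar> / 2 < \<bar>u x\<bar>" by (rule order_tendstoD(1))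
  then obtain M where M: "\<And>x. x \<ge> M \<Longrightarrow> \<bar>L\<bar> / 2 < \<bar>u x\<bar>" by (auto simp: eventually_at_top_linorder)
  have iabs: "integrable lborel (\<lambda>x. \<bar>u x\<bar>)" using int by auto
  have bnd: "real n * (\<bar>L\<bar> / 2) \<le> integral\<^sup>L lborel (\<lambda>x. \<bar>u x\<bar>)" for n :: nat
  proof -
    have sc: "set_integrable lborel {M..M + real n} (\<lambda>x. \<bar>L\<bar> / 2)"
      by (simp add: set_integrable_def integrable_mult_indicator[where f="\<lambda>_. \<bar>L\<bar>/2"])
    have su: "set_integrable lborel {M..M + real n} (\<lambda>x. \<bar>u x\<bar>)"
      using iabs by (rule si_of_int) simp
    have "real n * (\<bar>L\<bar> / 2) = (LINT x:{M..M + real n}|lborel. \<bar>L\<bar> / 2)"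
      by (simp add: set_integral_const emeasure_lborel_Icc measure_def)
    also have "\<dots> \<le> (LINT x:{M..M + real n}|lborel. \<bar>u x\<bar>)"
      by (rule set_integral_mono[OF sc su]) (use M in \<open>fastforce intro: less_imp_le\<close>)
    also have "\<dots> \<le> integral\<^sup>L lborel (\<lambda>x. \<bar>u x\<bar>)"
      unfolding set_lebesgue_integral_def
      by (rule integral_mono[OF su[unfolded set_integrable_def] iabs]) (auto simp: indicator_def)
    finally show ?thesis .
  qed
  obtain n :: nat where "integral\<^sup>L lborel (\<lambda>x. \<bar>u x\<bar>) / (\<bar>L\<bar> / 2) < real n"
    using reals_Archimedean2 by blast
  then have "integral\<^sup>L lborel (\<lambda>x. \<bar>u x\<bar>) < real n * (\<bar>L\<bar> / 2)"
    using L by (simp add: divide_less_eq)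
  then show False using bnd[of n] by simp
qed

lemma lim_bot_integrable_zero:
  fixes u :: "real \<Rightarrow> real"
  assumes lim: "(u \<longlongrightarrow> L) at_bot" and int: "integrable lborel u"
  shows "L = 0"
proof (rule lim_top_integrable_zero[where u="\<lambda>x. u (- x)"])
  show "((\<lambda>x. u (- x)) \<longlongrightarrow> L) at_top" using lim by (simp add: filterlim_at_bot_mirror)
  show "integrable lborel (\<lambda>x. u (- x))"
    using lborel_integrable_real_affine_iff[of "-1" u 0] int by simp
qed

lemma ac_tendsto_zero:
  assumes u: "ac_with_deriv u u'" and i': "integrable lborel u'" and i: "integrable lborel u"
  shows "(u \<longlongrightarrow> 0) at_top" "(u \<longlongrightarrow> 0) at_bot"
proof -
  show "(u \<longlongrightarrow> 0) at_top"
    using ac_lim_top[OF u i'] lim_top_integrable_zero[OF ac_lim_top[OF u i'] i] by simp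
  show "(u \<longlongrightarrow> 0) at_bot"
    using ac_lim_bot[OF u i'] lim_bot_integrable_zero[OF ac_lim_bot[OF u i'] i] by simp
qed

lemma ac_integral_zero:
  assumes u: "ac_with_deriv u u'" and i': "integrable lborel u'"
    and t: "(u \<longlongrightarrow> 0) at_top" and b: "(u \<longlongrightarrow> 0) at_bot"
  shows "integral\<^sup>L lborel u' = 0"
proof -
  have 1: "(\<lambda>n::nat. LINT x:{-real n..real n}|lborel. u' x) \<longlonglongrightarrow> integral\<^sup>L lborel u'"
    by (rule lint_sym_lim[OF i'])
  have eq: "(LINT x:{-real n..real n}|lborel. u' x) = u (real n) - u (- real n)" for n :: nat
    using ac_eq[OF u, of "-real n" "real n"] by simp
  have t': "(\<lambda>n::nat. u (real n)) \<longlonglongrightarrow> 0"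
    by (rule filterlim_compose[OF t filterlim_real_sequentially])
  have b': "(\<lambda>n::nat. u (- real n)) \<longlonglongrightarrow> 0"
    by (rule filterlim_compose[OF b]) (simp add: filterlim_uminus_at_bot filterlim_real_sequentially)
  have "(\<lambda>n::nat. u (real n) - u (- real n)) \<longlonglongrightarrow> 0 - 0" by (intro tendsto_diff t' b')
  then have "(\<lambda>n::nat. LINT x:{-real n..real n}|lborel. u' x) \<longlonglongrightarrow> 0" by (simp add: eq)
  with 1 show ?thesis using LIMSEQ_unique by blast
qed

lemma ae_zero_intervals:
  fixes g :: "real \<Rightarrow> real"
  assumes i: "\<And>a b. set_integrable lborel {a..b} g"
    and z: "\<And>a b. a \<le> b \<Longrightarrow> (LINT t:{a..b}|lborel. g t) = 0"
  shows "AE x in lborel. g x = 0"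
proof -
  have gm: "g \<in> borel_measurable lborel" by (rule meas_of_local_int[OF i])
  have n0: "AE x in lborel. indicator {-real n..real n} x * g x = 0" for n :: nat
  proof -
    define h where "h x = indicator {-real n..real n} x * g x" for x
    have ih: "integrable lborel h" using i[of "-real n" "real n"] unfolding set_integrable_def h_def by simp
    have hm: "h \<in> borel_measurable lborel" using ih by auto
    have hI: "integral\<^sup>L lborel (\<lambda>x. indicator {c<..} x * h x) = 0" for c
    proof -
      define d where "d = max c (-real n)"
      have "integral\<^sup>L lborel (\<lambda>x. indicator {c<..} x * h x) = integral\<^sup>L lborel (\<lambda>x. indicator {d..real n} x * g x)"
      proof (rule integral_cong_AE)
        show "(\<lambda>x. indicator {c<..} x * h x) \<in> borel_measurable lborel" using hm by measurable
        show "(\<lambda>x. indicator {d..real n} x * g x) \<in> borel_measurable lborel" using gm by measurable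
        show "AE x in lborel. indicator {c<..} x * h x = indicator {d..real n} x * g x"
          using AE_lborel_singleton[of d] by eventually_elim (auto simp: indicator_def h_def d_def)
      qed
      also have "\<dots> = 0"
      proof (cases "d \<le> real n")
        case True
        then show ?thesis using z[OF True] by (simp add: set_lebesgue_integral_def)
      next
        case False
        then have "{d..real n} = {}" by auto
        then show ?thesis by simp
      qed
      finally show ?thesis .
    qed
    define P where "P x = max 0 (h x)" for x
    define N where "N x = max 0 (- h x)" for x
    have iP: "integrable lborel P" unfolding P_def by (intro integrable_max ih) simp
    have iN: "integrable lborel N" unfolding N_def by (intro integrable_max ih integrable_minus) simp
    have hPN: "h x = P x - N x" for x by (simp add: P_def N_def max_def)
    have PN: "integral\<^sup>L lborel (\<lambda>x. P x * indicator {c<..} x) = integral\<^sup>L lborel (\<lambda>x. N x * indicator {c<..} x)" for c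
    proof -
      have iP': "integrable lborel (\<lambda>x. P x * indicator {c<..} x)"
        using integrable_mult_indicator[OF _ iP, of "{c<..}"] by (simp add: mult.commute)
      have iN': "integrable lborel (\<lambda>x. N x * indicator {c<..} x)"
        using integrable_mult_indicator[OF _ iN, of "{c<..}"] by (simp add: mult.commute)
      have "integral\<^sup>L lborel (\<lambda>x. P x * indicator {c<..} x) - integral\<^sup>L lborel (\<lambda>x. N x * indicator {c<..} x)
          = integral\<^sup>L lborel (\<lambda>x. indicator {c<..} x * h x)"
        by (subst Bochner_Integration.integral_diff[OF iP' iN', symmetric]) (simp add: hPN algebra_simps)
      then show ?thesis using hI[of c] by simp
    qed
    define M1 where "M1 = density lborel (\<lambda>x. ennreal (P x))"
    define M2 where "M2 = density lborel (\<lambda>x. ennreal (N x))"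
    have Pm: "P \<in> borel_measurable lborel" and Nm: "N \<in> borel_measurable lborel" using iP iN by auto
    have em: "emeasure (density lborel (\<lambda>x. ennreal (Q x))) {c<..} = ennreal (integral\<^sup>L lborel (\<lambda>x. Q x * indicator {c<..} x))"
      if iQ: "integrable lborel Q" and Q0: "\<And>x. Q x \<ge> 0" for Q :: "real \<Rightarrow> real" and c
    proof -
      have Qm: "Q \<in> borel_measurable lborel" using iQ by auto
      have iQ': "integrable lborel (\<lambda>x. Q x * indicator {c<..} x)"
        using integrable_mult_indicator[OF _ iQ, of "{c<..}"] by (simp add: mult.commute)
      have "emeasure (density lborel (\<lambda>x. ennreal (Q x))) {c<..} = (\<integral>\<^sup>+ x. ennreal (Q x) * indicator {c<..} x \<partial>lborel)"
        by (rule emeasure_density) (use Qm in auto)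
      also have "\<dots> = (\<integral>\<^sup>+ x. ennreal (Q x * indicator {c<..} x) \<partial>lborel)"
        by (intro nn_integral_cong) (auto simp: indicator_def)
      also have "\<dots> = ennreal (integral\<^sup>L lborel (\<lambda>x. Q x * indicator {c<..} x))"
        by (rule nn_integral_eq_integral[OF iQ']) (use Q0 in auto)
      finally show ?thesis .
    qed
    have P0: "P x \<ge> 0" and N0: "N x \<ge> 0" for x by (auto simp: P_def N_def)
    have "M1 = M2"
    proof (rule measure_eqI_lessThan)
      show "sets M1 = sets borel" "sets M2 = sets borel" by (simp_all add: M1_def M2_def)
      show "emeasure M1 {x<..} < \<infinity>" for x unfolding M1_def using em[OF iP P0] by simp
      show "emeasure M1 {x<..} = emeasure M2 {x<..}" for x
        unfolding M1_def M2_def using em[OF iP P0, of x] em[OF iN N0, of x] PN[of x] by simp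
    qed
    then have "AE x in lborel. ennreal (P x) = ennreal (N x)"
      unfolding M1_def M2_def
      by (intro sigma_finite_measure.density_unique[OF sigma_finite_lborel]) (use Pm Nm in auto)
    then show ?thesis
      by eventually_elim (use P0 N0 in \<open>auto simp: h_def[symmetric] hPN\<close>)
  qed
  then have "AE x in lborel. \<forall>n::nat. indicator {-real n..real n} x * g x = 0"
    by (subst AE_all_countable) (rule allI)
  then show ?thesis
  proof eventually_elim
    case (elim x)
    obtain N :: nat where "\<bar>x\<bar> \<le> real N" using real_arch_simple by blast
    then show ?case using elim[rule_format, of N] by (auto simp: indicator_def split: if_splits)
  qed
qed


lemma sqrt_shift_deriv:
  fixes e :: real
  shows "y > -e \<Longrightarrow> ((\<lambda>y. sqrt (y + e)) has_real_derivative inverse (sqrt (y + e)) / 2) (at y)"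
  by (auto intro!: derivative_eq_intros)

lemma amgm_q:
  fixes d p :: real
  assumes "p > 0"
  shows "\<bar>d\<bar> / (2 * sqrt p) \<le> (d\<^sup>2 / p + 1) / 4"
proof -
  define q where "q = \<bar>d\<bar> / sqrt p"
  have q2: "q\<^sup>2 = d\<^sup>2 / p" using assms by (simp add: q_def power_divide)
  have sq: "(q - 1)\<^sup>2 = q\<^sup>2 - 2 * q + 1" by (simp add: power2_eq_square algebra_simps)
  have "0 \<le> (q - 1)\<^sup>2" by simp
  then have "2 * q \<le> q\<^sup>2 + 1" using sq by linarith
  then have "q \<le> (q\<^sup>2 + 1) / 2" by simp
  moreover have "(sqrt p)\<^sup>2 = p" using assms by simp
  ultimately show ?thesis using q2 assms by (simp add: q_def field_simps)
qed

lemma zero_set_interval: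
  fixes p p' :: "real \<Rightarrow> real"
  assumes nonneg: "\<And>x. p x \<ge> 0" and ac: "ac_with_deriv p p'"
    and fisher: "set_integrable lborel {x. p x > 0} (\<lambda>x. (p' x)\<^sup>2 / p x)"
    and ab: "a \<le> b"
  shows "(LINT t:{a..b}|lborel. (if p t = 0 then p' t else 0)) = 0"
proof -
  define g where "g t = (if p t = 0 then p' t else 0)" for t
  have cp: "continuous_on UNIV p" using ac by (rule ac_cont_on)
  have pm: "p \<in> borel_measurable lborel" using cp by (simp add: borel_measurable_continuous_onI)
  have p'm: "p' \<in> borel_measurable lborel" using ac by (rule ac_meas)
  have ip': "set_integrable lborel {c..d} p'" for c d using ac by (rule ac_int)
  have ig: "set_integrable lborel {c..d} g" for c d
  proof -
    have "set_integrable lborel {c..d} (\<lambda>t. p' t * (if p t = 0 then 1 else 0))"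
      by (rule si_mult_bounded[OF ip', where B=1]) (use pm in auto)
    moreover have "(\<lambda>t. p' t * (if p t = 0 then 1 else 0)) = g" by (auto simp: g_def fun_eq_iff)
    ultimately show ?thesis by simp
  qed
  define T where "T t = indicator {x. 0 < p x} t * ((p' t)\<^sup>2 / p t) + 1" for t
  have iT: "set_integrable lborel {a..b} T"
  proof -
    have "integrable lborel (\<lambda>t. indicator {x. 0 < p x} t * ((p' t)\<^sup>2 / p t))"
      using fisher unfolding set_integrable_def by simp
    then have "set_integrable lborel {a..b} (\<lambda>t. indicator {x. 0 < p x} t * ((p' t)\<^sup>2 / p t))"
      by (rule si_of_int) simp
    moreover have "set_integrable lborel {a..b} (\<lambda>t. 1::real)"
      unfolding set_integrable_def by (simp add: integrable_real_indicator emeasure_lborel_Icc_eq)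
    ultimately show ?thesis unfolding T_def by (rule set_integral_add(1))
  qed
  define C where "C = sqrt (p b + 1) + sqrt (p a + 1) + (LINT t:{a..b}|lborel. T t) / 4"
  have C0: "C \<ge> 0"
  proof -
    have "0 \<le> (LINT t:{a..b}|lborel. T t)"
      unfolding set_lebesgue_integral_def
      by (rule Bochner_Integration.integral_nonneg) (auto simp: T_def indicator_def intro!: divide_nonneg_pos)
    then show ?thesis unfolding C_def by (simp add: nonneg add_nonneg_nonneg)
  qed
  have key: "\<bar>LINT t:{a..b}|lborel. g t\<bar> \<le> 2 * sqrt e * C" if e: "0 < e" "e \<le> 1" for e
  proof -
    have chain: "ac_with_deriv (\<lambda>t. sqrt (p t + e)) (\<lambda>t. inverse (sqrt (p t + e)) / 2 * p' t)"
    proof (rule ac_chain[OF ac, where c="-e"])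
      show "\<And>y. - e < y \<Longrightarrow> ((\<lambda>y. sqrt (y + e)) has_real_derivative inverse (sqrt (y + e)) / 2) (at y)"
        by (rule sqrt_shift_deriv)
      show "continuous_on {- e<..} (\<lambda>y. inverse (sqrt (y + e)) / 2)"
        by (intro continuous_intros) auto
      show "- e < p t" for t using nonneg[of t] e by linarith
    qed
    define w where "w t = inverse (sqrt (p t + e)) / 2 * p' t" for t
    define r where "r t = (if p t > 0 then w t else 0)" for t
    have iw: "set_integrable lborel {a..b} w" unfolding w_def using chain by (rule ac_int)
    have wsplit: "w t = (inverse (sqrt e) / 2) * g t + r t" for t
      using nonneg[of t] by (auto simp: w_def r_def g_def)
    have ir: "set_integrable lborel {a..b} r"
    proof -
      have "set_integrable lborel {a..b} (\<lambda>t. w t - (inverse (sqrt e) / 2) * g t)"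
        by (intro set_integral_diff(1) iw set_integrable_mult_right ig)
      then show ?thesis by (simp add: wsplit)
    qed
    have eq1: "sqrt (p b + e) - sqrt (p a + e) = (inverse (sqrt e) / 2) * (LINT t:{a..b}|lborel. g t) + (LINT t:{a..b}|lborel. r t)"
    proof -
      have "sqrt (p b + e) - sqrt (p a + e) = (LINT t:{a..b}|lborel. w t)"
        using ac_eq[OF chain ab] by (simp add: w_def)
      also have "\<dots> = (LINT t:{a..b}|lborel. (inverse (sqrt e) / 2) * g t + r t)" by (simp add: wsplit)
      also have "\<dots> = (inverse (sqrt e) / 2) * (LINT t:{a..b}|lborel. g t) + (LINT t:{a..b}|lborel. r t)"
        using ig ir by (simp add: set_integral_add(2) set_integrable_mult_right set_integral_mult_right)
      finally show ?thesis .
    qed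
    have rb: "\<bar>LINT t:{a..b}|lborel. r t\<bar> \<le> (LINT t:{a..b}|lborel. T t) / 4"
    proof -
      have "\<bar>LINT t:{a..b}|lborel. r t\<bar> \<le> (LINT t:{a..b}|lborel. \<bar>r t\<bar>)"
        using set_integral_norm_bound[OF ir] by simp
      also have "\<dots> \<le> (LINT t:{a..b}|lborel. T t / 4)"
      proof (rule set_integral_mono)
        show "set_integrable lborel {a..b} (\<lambda>t. \<bar>r t\<bar>)" by (rule set_integrable_abs[OF ir])
        show "set_integrable lborel {a..b} (\<lambda>t. T t / 4)" by (rule set_integrable_divide[OF iT])
        fix t assume "t \<in> {a..b}"
        show "\<bar>r t\<bar> \<le> T t / 4"
        proof (cases "p t > 0")
          case True
          have "\<bar>r t\<bar> = \<bar>p' t\<bar> / (2 * sqrt (p t + e))" using True e by (simp add: r_def w_def abs_mult field_simps)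
          also have "\<dots> \<le> \<bar>p' t\<bar> / (2 * sqrt (p t))"
            using True e by (intro divide_left_mono mult_left_mono) auto
          also have "\<dots> \<le> ((p' t)\<^sup>2 / p t + 1) / 4" by (rule amgm_q[OF True])
          also have "\<dots> = T t / 4" using True by (simp add: T_def)
          finally show ?thesis .
        next
          case False
          then show ?thesis by (simp add: r_def T_def)
        qed
      qed
      also have "\<dots> = (LINT t:{a..b}|lborel. T t) / 4" by (rule set_integral_divide_zero)
      finally show ?thesis .
    qed
    have lhs: "\<bar>sqrt (p b + e) - sqrt (p a + e)\<bar> \<le> sqrt (p b + 1) + sqrt (p a + 1)"
    proof -
      have A: "sqrt (p b + e) \<le> sqrt (p b + 1)" "sqrt (p a + e) \<le> sqrt (p a + 1)" using e by auto
      have B: "0 \<le> sqrt (p b + e)" "0 \<le> sqrt (p a + e)" using nonneg[of a] nonneg[of b] e by auto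
      show ?thesis unfolding abs_le_iff using A B by linarith
    qed
    define k where "k = inverse (sqrt e) / 2"
    have k0: "k > 0" using e by (simp add: k_def)
    have "k * \<bar>LINT t:{a..b}|lborel. g t\<bar> = \<bar>k * (LINT t:{a..b}|lborel. g t)\<bar>"
      using k0 by (simp add: abs_mult)
    also have "k * (LINT t:{a..b}|lborel. g t) = (sqrt (p b + e) - sqrt (p a + e)) - (LINT t:{a..b}|lborel. r t)"
      using eq1 by (simp add: k_def)
    also have "\<bar>(sqrt (p b + e) - sqrt (p a + e)) - (LINT t:{a..b}|lborel. r t)\<bar>
        \<le> \<bar>sqrt (p b + e) - sqrt (p a + e)\<bar> + \<bar>LINT t:{a..b}|lborel. r t\<bar>" by (rule abs_triangle_ineq4)
    also have "\<dots> \<le> C" using lhs rb unfolding C_def by linarith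
    finally have "(inverse (sqrt e) / 2) * \<bar>LINT t:{a..b}|lborel. g t\<bar> \<le> C" by (simp add: k_def)
    then show ?thesis using e by (simp add: field_simps)
  qed
  have "\<bar>LINT t:{a..b}|lborel. g t\<bar> \<le> 0"
  proof (rule field_le_epsilon)
    fix \<delta> :: real assume d: "\<delta> > 0"
    define e where "e = min 1 ((\<delta> / (2 * C + 1))\<^sup>2)"
    have e0: "0 < e" "e \<le> 1" using d C0 by (auto simp: e_def)
    have "sqrt e \<le> sqrt ((\<delta> / (2 * C + 1))\<^sup>2)" unfolding e_def by (simp del: real_sqrt_abs)
    also have "\<dots> = \<delta> / (2 * C + 1)" using d C0 by simp
    finally have se: "sqrt e \<le> \<delta> / (2 * C + 1)" .
    have "2 * sqrt e * C \<le> 2 * (\<delta> / (2 * C + 1)) * C"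
      using mult_right_mono[OF se C0] by simp
    also have "\<dots> \<le> \<delta>" using d C0 by (simp add: field_simps)
    finally show "\<bar>LINT t:{a..b}|lborel. g t\<bar> \<le> 0 + \<delta>" using key[OF e0] by simp
  qed
  then show ?thesis by (simp add: g_def)
qed

lemma zero_set_deriv:
  fixes p p' :: "real \<Rightarrow> real"
  assumes nonneg: "\<And>x. p x \<ge> 0" and ac: "ac_with_deriv p p'"
    and fisher: "set_integrable lborel {x. p x > 0} (\<lambda>x. (p' x)\<^sup>2 / p x)"
  shows "AE x in lborel. p x = 0 \<longrightarrow> p' x = 0"
proof -
  have cp: "continuous_on UNIV p" using ac by (rule ac_cont_on)
  have pm: "p \<in> borel_measurable lborel" using cp by (simp add: borel_measurable_continuous_onI)
  have ip': "set_integrable lborel {c..d} p'" for c d using ac by (rule ac_int)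
  have ig: "set_integrable lborel {c..d} (\<lambda>t. if p t = 0 then p' t else 0)" for c d
  proof -
    have "set_integrable lborel {c..d} (\<lambda>t. p' t * (if p t = 0 then 1 else 0))"
      by (rule si_mult_bounded[OF ip', where B=1]) (use pm in auto)
    moreover have "(\<lambda>t. p' t * (if p t = 0 then 1 else 0)) = (\<lambda>t. if p t = 0 then p' t else 0)"
      by (auto simp: fun_eq_iff)
    ultimately show ?thesis by simp
  qed
  have "AE x in lborel. (if p x = 0 then p' x else 0) = 0"
    by (rule ae_zero_intervals[OF ig zero_set_interval[OF nonneg ac fisher]])
  then show ?thesis by eventually_elim auto
qed

lemma lambda_trick:
  fixes A J :: real
  assumes J0: "J \<ge> 0" and b: "\<And>l. l > 0 \<Longrightarrow> A \<le> (l * J + 1 / l) / 2"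
  shows "A \<le> sqrt J"
proof (cases "J > 0")
  case True
  define l where "l = 1 / sqrt J"
  have l0: "l > 0" using True by (simp add: l_def)
  have e1: "l * J = sqrt J" unfolding l_def using real_div_sqrt[of J] True by simp
  have e2: "1 / l = sqrt J" unfolding l_def by simp
  have "A \<le> (l * J + 1 / l) / 2" by (rule b[OF l0])
  then show ?thesis unfolding e1 e2 by simp
next
  case False
  then have J: "J = 0" using J0 by simp
  have "A \<le> 0"
  proof (rule field_le_epsilon)
    fix d :: real assume d: "d > 0"
    define l where "l = 1 / (2 * d)"
    have l0: "l > 0" using d by (simp add: l_def)
    have "A \<le> (l * J + 1 / l) / 2" by (rule b[OF l0])
    also have "\<dots> = d" using J d by (simp add: l_def)
    finally show "A \<le> 0 + d" by simp
  qed
  then show ?thesis using J by simp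
qed

lemma amgm2:
  fixes a b p :: real
  assumes "p > 0"
  shows "\<bar>a * b\<bar> \<le> (a\<^sup>2 / p + b\<^sup>2 * p) / 2"
proof -
  have "0 \<le> (\<bar>a\<bar> - \<bar>b\<bar> * p)\<^sup>2" by simp
  then have i: "\<bar>a * b\<bar> * (2 * p) \<le> a\<^sup>2 + b\<^sup>2 * p\<^sup>2"
    by (simp add: power2_eq_square algebra_simps abs_mult)
  have "\<bar>a * b\<bar> \<le> (a\<^sup>2 + b\<^sup>2 * p\<^sup>2) / (2 * p)" using i assms by (simp add: pos_le_divide_eq)
  also have "(a\<^sup>2 + b\<^sup>2 * p\<^sup>2) / (2 * p) = (a\<^sup>2 / p + b\<^sup>2 * p) / 2" using assms
    by (simp add: field_simps power2_eq_square)
  finally show ?thesis .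
qed

locale fsetup =
  fixes p p' :: "real \<Rightarrow> real"
  assumes nonneg: "\<And>x. p x \<ge> 0"
    and dens_int: "integrable lborel p"
    and dens_total: "(LINT x|lborel. p x) = 1"
    and ac: "ac_with_deriv p p'"
    and mean_int: "integrable lborel (\<lambda>x. x * p x)"
    and mean0: "(LINT x|lborel. x * p x) = 0"
    and var_int: "integrable lborel (\<lambda>x. x\<^sup>2 * p x)"
    and var1: "(LINT x|lborel. x\<^sup>2 * p x) = 1"
    and fisher: "finite_fisher_info p p'"
begin

lemma fis: "set_integrable lborel {x. p x > 0} (\<lambda>x. (p' x)\<^sup>2 / p x)"
  using fisher by (simp add: finite_fisher_info_def)

lemma ae0: "AE x in lborel. p x = 0 \<longrightarrow> p' x = 0"
  by (rule zero_set_deriv[OF nonneg ac fis])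

lemma cp: "continuous_on UNIV p" using ac by (rule ac_cont_on)
lemma pm[measurable]: "p \<in> borel_measurable borel" using cp by (simp add: borel_measurable_continuous_onI)
lemma p'm[measurable]: "p' \<in> borel_measurable borel" using ac_meas[OF ac] by simp

definition Fi where "Fi x = indicator {x. 0 < p x} x * ((p' x)\<^sup>2 / p x)"

lemma Fi_int: "integrable lborel Fi"
  using fis unfolding set_integrable_def Fi_def by simp

lemma Fi_nonneg: "Fi x \<ge> 0" by (simp add: Fi_def indicator_def)

lemma fisher_info_eq: "fisher_info p p' = integral\<^sup>L lborel Fi"
  unfolding fisher_info_def set_lebesgue_integral_def Fi_def by simp

lemma Fi_m[measurable]: "Fi \<in> borel_measurable borel"
  unfolding Fi_def by measurable

lemma int_p': "integrable lborel p'"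
proof (rule Bochner_Integration.integrable_bound[where f="\<lambda>x. Fi x + p x"])
  show "integrable lborel (\<lambda>x. Fi x + p x)" by (intro Bochner_Integration.integrable_add Fi_int dens_int)
  show "p' \<in> borel_measurable lborel" by simp
  show "AE x in lborel. norm (p' x) \<le> norm (Fi x + p x)"
    using ae0
  proof eventually_elim
    case (elim x)
    show ?case
    proof (cases "p x > 0")
      case True
      have "\<bar>p' x * 1\<bar> \<le> ((p' x)\<^sup>2 / p x + 1\<^sup>2 * p x) / 2" by (rule amgm2[OF True])
      also have "\<dots> \<le> Fi x + p x" using True by (simp add: Fi_def field_simps)
      finally show ?thesis using True Fi_nonneg[of x] by simp
    next
      case False
      then have "p x = 0" using nonneg[of x] by simp
      then show ?thesis using elim Fi_nonneg[of x] by simp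
    qed
  qed
qed

lemma int_xp': "integrable lborel (\<lambda>x. x * p' x)"
proof (rule Bochner_Integration.integrable_bound[where f="\<lambda>x. Fi x + x\<^sup>2 * p x"])
  show "integrable lborel (\<lambda>x. Fi x + x\<^sup>2 * p x)" by (intro Bochner_Integration.integrable_add Fi_int var_int)
  show "(\<lambda>x. x * p' x) \<in> borel_measurable lborel" by simp
  show "AE x in lborel. norm (x * p' x) \<le> norm (Fi x + x\<^sup>2 * p x)"
    using ae0
  proof eventually_elim
    case (elim x)
    have nn: "0 \<le> Fi x + x\<^sup>2 * p x" using Fi_nonneg[of x] nonneg[of x] by simp
    show ?case
    proof (cases "p x > 0")
      case True
      have "\<bar>p' x * x\<bar> \<le> ((p' x)\<^sup>2 / p x + x\<^sup>2 * p x) / 2" by (rule amgm2[OF True])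
      also have "\<dots> \<le> Fi x + x\<^sup>2 * p x" using True by (simp add: Fi_def field_simps)
      finally show ?thesis using nn by (simp add: mult.commute)
    next
      case False
      then have "p x = 0" using nonneg[of x] by simp
      then show ?thesis using elim nn by simp
    qed
  qed
qed

lemma p_lim: "(p \<longlongrightarrow> 0) at_top" "(p \<longlongrightarrow> 0) at_bot"
  using ac_tendsto_zero[OF ac int_p' dens_int] by auto

lemma ac_xp: "ac_with_deriv (\<lambda>x. x * p x) (\<lambda>x. 1 * p x + x * p' x)"
proof (rule ac_mult[OF _ ac])
  show "ac_with_deriv (\<lambda>x. x) (\<lambda>x. 1)"
    by (rule ac_smooth) (auto intro!: derivative_eq_intros)
qed

lemma int_xp'_eq: "integral\<^sup>L lborel (\<lambda>x. x * p' x) = -1"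
proof -
  have i: "integrable lborel (\<lambda>x. 1 * p x + x * p' x)"
    by (intro Bochner_Integration.integrable_add int_xp') (simp add: dens_int)
  have "integral\<^sup>L lborel (\<lambda>x. 1 * p x + x * p' x) = 0"
    using ac_integral_zero[OF ac_xp i] ac_tendsto_zero[OF ac_xp i mean_int] by simp
  then have "integral\<^sup>L lborel p + integral\<^sup>L lborel (\<lambda>x. x * p' x) = 0"
    using dens_int int_xp' by simp
  then show ?thesis using dens_total by simp
qed

definition w where "w x = p' x + x * p x"

lemma w_m[measurable]: "w \<in> borel_measurable lborel" unfolding w_def by simp

lemma int_w: "integrable lborel w"
  unfolding w_def by (intro Bochner_Integration.integrable_add int_p' mean_int)

definition Jf where "Jf x = indicator {x. 0 < p x} x * ((w x)\<^sup>2 / p x)"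

lemma Jf_nonneg: "Jf x \<ge> 0" by (simp add: Jf_def indicator_def)

lemma Jf_ae: "AE x in lborel. Jf x = Fi x + 2 * (x * p' x) + x\<^sup>2 * p x"
  using ae0
proof eventually_elim
  case (elim x)
  show ?case
  proof (cases "p x > 0")
    case True
    then show ?thesis by (simp add: Jf_def Fi_def w_def power2_eq_square field_simps)
  next
    case False
    then have "p x = 0" using nonneg[of x] by simp
    then show ?thesis using elim by (simp add: Jf_def Fi_def)
  qed
qed

lemma Jf_int: "integrable lborel Jf" and Jf_eq: "integral\<^sup>L lborel Jf = fisher_info p p' - 1"
proof -
  have i: "integrable lborel (\<lambda>x. Fi x + 2 * (x * p' x) + x\<^sup>2 * p x)"
    by (intro Bochner_Integration.integrable_add Bochner_Integration.integrable_mult_right Fi_int int_xp' var_int)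
  have m: "Jf \<in> borel_measurable lborel" unfolding Jf_def by simp
  show "integrable lborel Jf"
    by (rule integrable_cong_AE_imp[OF i m]) (use Jf_ae in \<open>auto elim: AE_mp\<close>)
  have "integral\<^sup>L lborel Jf = integral\<^sup>L lborel (\<lambda>x. Fi x + 2 * (x * p' x) + x\<^sup>2 * p x)"
    by (rule integral_cong_AE[OF m _ Jf_ae]) simp
  also have "\<dots> = integral\<^sup>L lborel Fi + 2 * integral\<^sup>L lborel (\<lambda>x. x * p' x) + integral\<^sup>L lborel (\<lambda>x. x\<^sup>2 * p x)"
    using Fi_int int_xp' var_int by simp
  also have "\<dots> = fisher_info p p' - 1" using int_xp'_eq var1 fisher_info_eq by simp
  finally show "integral\<^sup>L lborel Jf = fisher_info p p' - 1" .
qed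

lemma w_l1: "integral\<^sup>L lborel (\<lambda>x. \<bar>w x\<bar>) \<le> sqrt (fisher_info p p' - 1)"
proof -
  have J0: "fisher_info p p' - 1 \<ge> 0"
    using Jf_eq Bochner_Integration.integral_nonneg[of lborel Jf] Jf_nonneg by simp
  show ?thesis
  proof (rule lambda_trick[OF J0])
    fix l :: real assume l: "l > 0"
    have "integral\<^sup>L lborel (\<lambda>x. \<bar>w x\<bar>) \<le> integral\<^sup>L lborel (\<lambda>x. (l * Jf x + p x / l) / 2)"
    proof (rule integral_mono_AE)
      show "integrable lborel (\<lambda>x. \<bar>w x\<bar>)" using int_w by simp
      show "integrable lborel (\<lambda>x. (l * Jf x + p x / l) / 2)"
        by (intro Bochner_Integration.integrable_divide Bochner_Integration.integrable_add
              Bochner_Integration.integrable_mult_right Jf_int dens_int)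
      show "AE x in lborel. \<bar>w x\<bar> \<le> (l * Jf x + p x / l) / 2"
        using ae0
      proof eventually_elim
        case (elim x)
        show ?case
        proof (cases "p x > 0")
          case True
          then have q: "p x / l > 0" using l by simp
          have "\<bar>w x * 1\<bar> \<le> ((w x)\<^sup>2 / (p x / l) + 1\<^sup>2 * (p x / l)) / 2" by (rule amgm2[OF q])
          also have "\<dots> = (l * Jf x + p x / l) / 2" using True l by (simp add: Jf_def field_simps)
          finally show ?thesis by simp
        next
          case False
          then have "p x = 0" using nonneg[of x] by simp
          then show ?thesis using elim by (simp add: w_def Jf_def)
        qed
      qed
    qed
    also have "\<dots> = (l * integral\<^sup>L lborel Jf + 1 / l) / 2"
      using Jf_int dens_int dens_total by simp
    finally show "integral\<^sup>L lborel (\<lambda>x. \<bar>w x\<bar>) \<le> (l * (fisher_info p p' - 1) + 1 / l) / 2"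
      using Jf_eq by simp
  qed
qed

end

abbreviation "\<phi> \<equiv> std_normal_density"


lemma phi_pos: "\<phi> x > 0" by (simp add: std_normal_density_def)

lemma phi_eq': "\<phi> = (\<lambda>x. (1 / sqrt (2 * pi)) * exp (- x\<^sup>2 / 2))"
  by (rule ext) (rule std_normal_density_def)
lemma gauss_deriv_c: "((\<lambda>x. c * exp (- x\<^sup>2 / 2)) has_real_derivative (- x * (c * exp (- x\<^sup>2 / 2)))) (at x)"
  for c :: real by (auto intro!: derivative_eq_intros simp: algebra_simps)
lemma phi_deriv: "(\<phi> has_real_derivative (- x * \<phi> x)) (at x)"
  unfolding phi_eq' by (rule gauss_deriv_c)
definition E :: "real \<Rightarrow> real" where "E x = sqrt (2 * pi) * exp (x\<^sup>2 / 2)"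
lemma E_phi: "E x * \<phi> x = 1"
  unfolding phi_eq' E_def
proof -
  have "exp (x\<^sup>2 / 2) * exp (- x\<^sup>2 / 2) = 1" by (simp flip: exp_add)
  then show "sqrt (2 * pi) * exp (x\<^sup>2 / 2) * (1 / sqrt (2 * pi) * exp (- x\<^sup>2 / 2)) = 1"
    by simp
qed
lemma E_deriv: "(E has_real_derivative (x * E x)) (at x)"
  unfolding E_def[abs_def]
  by (auto intro!: derivative_eq_intros simp: E_def algebra_simps)
lemma exp_half_le: "exp (1/2 :: real) \<le> 2"
proof -
  have "exp (1/2 :: real) * exp (1/2) = exp 1" by (simp flip: exp_add)
  also have "\<dots> < 272 / 100" by (rule e_less_272)
  finally have h: "exp (1/2 :: real) * exp (1/2) < 4" by simp
  show ?thesis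
  proof (rule ccontr)
    assume "\<not> ?thesis"
    then have "2 < exp (1/2::real)" by simp
    then have "2 * 2 < exp (1/2::real) * exp (1/2)" by (intro mult_strict_mono) auto
    then show False using h by simp
  qed
qed

lemma phi_cont: "continuous_on UNIV \<phi>"
  unfolding phi_eq' by (intro continuous_intros) auto

lemma phi_m[measurable]: "\<phi> \<in> borel_measurable borel"
  using phi_cont by (simp add: borel_measurable_continuous_onI)

lemma phi_int: "integrable lborel \<phi>"
  using integrable_std_normal_moment[of 0] by simp

lemma phi_total: "integral\<^sup>L lborel \<phi> = 1"
  using integral_std_normal_moment_even[of 0] by simp

lemma phi_x2_int: "integrable lborel (\<lambda>x. x\<^sup>2 * \<phi> x)"
  using integrable_std_normal_moment[of 2] by (simp add: mult.commute)

lemma phi_x2: "integral\<^sup>L lborel (\<lambda>x. x\<^sup>2 * \<phi> x) = 1"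
  using integral_std_normal_moment_even[of 1] by (simp add: mult.commute)

lemma phi_absx_int: "integrable lborel (\<lambda>x. \<bar>x\<bar> * \<phi> x)"
  using integrable_std_normal_moment_abs[of 1] by (simp add: mult.commute)

lemma phi_x_int: "integrable lborel (\<lambda>x. x * \<phi> x)"
  using integrable_std_normal_moment[of 1] by (simp add: mult.commute)

lemma phi_absx_le: "integral\<^sup>L lborel (\<lambda>x. \<bar>x\<bar> * \<phi> x) \<le> 1"
proof -
  have "integral\<^sup>L lborel (\<lambda>x. \<bar>x\<bar> * \<phi> x) \<le> integral\<^sup>L lborel (\<lambda>x. (\<phi> x + x\<^sup>2 * \<phi> x) / 2)"
  proof (rule integral_mono[OF phi_absx_int])
    show "integrable lborel (\<lambda>x. (\<phi> x + x\<^sup>2 * \<phi> x) / 2)"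
      by (intro Bochner_Integration.integrable_divide Bochner_Integration.integrable_add phi_int phi_x2_int)
    fix x :: real
    have "\<bar>x\<bar> \<le> (1 + x\<^sup>2) / 2"
    proof -
      have "0 \<le> (\<bar>x\<bar> - 1)\<^sup>2" by simp
      then show ?thesis by (simp add: power2_eq_square algebra_simps)
    qed
    then have "\<bar>x\<bar> * \<phi> x \<le> (1 + x\<^sup>2) / 2 * \<phi> x" using phi_pos[of x] by (intro mult_right_mono) auto
    then show "\<bar>x\<bar> * \<phi> x \<le> (\<phi> x + x\<^sup>2 * \<phi> x) / 2" by (simp add: algebra_simps)
  qed
  also have "\<dots> = 1" using phi_int phi_x2_int phi_total phi_x2 by simp
  finally show ?thesis .
qed

lemma E_ac: "ac_with_deriv E (\<lambda>x. x * E x)"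
  by (rule ac_smooth[OF E_deriv]) (auto simp: E_def[abs_def] intro!: continuous_intros)

lemma gauss_cmp_pos:
  assumes "0 \<le> x" "x \<le> t"
  shows "\<phi> t \<le> exp (1/2) * \<phi> x * exp (- (t - x))"
proof -
  have a: "- t\<^sup>2 / 2 \<le> 1/2 + (- x\<^sup>2 / 2) + (- (t - x))"
  proof -
    have "0 \<le> (t - x - 1)\<^sup>2" by simp
    moreover have "0 \<le> x * (t - x)" using assms by simp
    ultimately show ?thesis by (simp add: power2_eq_square algebra_simps)
  qed
  have "exp (- t\<^sup>2 / 2) \<le> exp (1/2) * exp (- x\<^sup>2 / 2) * exp (- (t - x))"
    using a by (simp flip: exp_add del: exp_le_cancel_iff) (simp add: algebra_simps)
  then have "(1 / sqrt (2 * pi)) * exp (- t\<^sup>2 / 2) \<le> (1 / sqrt (2 * pi)) * (exp (1/2) * exp (- x\<^sup>2 / 2) * exp (- (t - x)))"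
    by (intro mult_left_mono) auto
  then show ?thesis by (simp add: std_normal_density_def algebra_simps)
qed

lemma gauss_cmp_neg:
  assumes "t \<le> x" "x \<le> 0"
  shows "\<phi> t \<le> exp (1/2) * \<phi> x * exp (t - x)"
proof -
  have a: "- t\<^sup>2 / 2 \<le> 1/2 + (- x\<^sup>2 / 2) + (t - x)"
  proof -
    have "0 \<le> (x - t - 1)\<^sup>2" by simp
    moreover have "0 \<le> (- x) * (x - t)" using mult_nonneg_nonneg[of "-x" "x - t"] assms by simp
    ultimately show ?thesis by (simp add: power2_eq_square algebra_simps)
  qed
  have "exp (- t\<^sup>2 / 2) \<le> exp (1/2) * exp (- x\<^sup>2 / 2) * exp (t - x)"
    using a by (simp flip: exp_add del: exp_le_cancel_iff) (simp add: algebra_simps)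
  then have "(1 / sqrt (2 * pi)) * exp (- t\<^sup>2 / 2) \<le> (1 / sqrt (2 * pi)) * (exp (1/2) * exp (- x\<^sup>2 / 2) * exp (t - x))"
    by (intro mult_left_mono) auto
  then show ?thesis by (simp add: std_normal_density_def algebra_simps)
qed

lemma g1_int: "integrable lborel (\<lambda>t. (\<bar>t\<bar> + 1) * \<phi> t)"
proof -
  have "integrable lborel (\<lambda>t. \<bar>t\<bar> * \<phi> t + \<phi> t)"
    by (intro Bochner_Integration.integrable_add phi_absx_int phi_int)
  then show ?thesis by (simp add: algebra_simps)
qed

lemma tail_pos:
  assumes x: "x \<ge> 0"
  shows "(LINT t:{x..}|lborel. (\<bar>t\<bar> + 1) * \<phi> t) \<le> 3 * \<phi> x"
proof -
  define c0 where "c0 = exp (1/2::real)"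
  define H where "H t = - \<phi> t - c0 * \<phi> x * exp (- (t - x))" for t
  define H' where "H' t = t * \<phi> t + c0 * \<phi> x * exp (- (t - x))" for t
  have Hd: "(H has_real_derivative H' t) (at t)" for t
  proof -
    have 1: "((\<lambda>t. - \<phi> t) has_real_derivative - (- t * \<phi> t)) (at t)" by (rule DERIV_minus[OF phi_deriv])
    have 2: "((\<lambda>t. c0 * \<phi> x * exp (- (t - x))) has_real_derivative - (c0 * \<phi> x * exp (- (t - x)))) (at t)"
      by (auto intro!: derivative_eq_intros)
    have "((\<lambda>t. - \<phi> t - c0 * \<phi> x * exp (- (t - x))) has_real_derivative
         (- (- t * \<phi> t) - - (c0 * \<phi> x * exp (- (t - x))))) (at t)"
      by (rule DERIV_diff[OF 1 2])
    then show ?thesis by (simp add: H_def[abs_def] H'_def)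
  qed
  have H'c: "continuous_on UNIV H'" unfolding H'_def[abs_def]
    by (intro continuous_intros phi_cont)
  have acH: "ac_with_deriv H H'" by (rule ac_smooth[OF Hd H'c])
  have c0: "c0 \<le> 2" unfolding c0_def by (rule exp_half_le)
  have si: "set_integrable lborel {x..} (\<lambda>t. (\<bar>t\<bar> + 1) * \<phi> t)" by (rule si_of_int[OF g1_int]) simp
  have bnd: "(LINT t:{x..b}|lborel. (\<bar>t\<bar> + 1) * \<phi> t) \<le> 3 * \<phi> x" if b: "b \<ge> x" for b
  proof -
    have "(LINT t:{x..b}|lborel. (\<bar>t\<bar> + 1) * \<phi> t) \<le> (LINT t:{x..b}|lborel. H' t)"
    proof (rule set_integral_mono)
      show "set_integrable lborel {x..b} (\<lambda>t. (\<bar>t\<bar> + 1) * \<phi> t)" by (rule si_of_int[OF g1_int]) simp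
      show "set_integrable lborel {x..b} H'" using acH by (rule ac_int)
      fix t assume t: "t \<in> {x..b}"
      have "\<phi> t \<le> c0 * \<phi> x * exp (- (t - x))" unfolding c0_def by (rule gauss_cmp_pos) (use t x in auto)
      then show "(\<bar>t\<bar> + 1) * \<phi> t \<le> H' t" using t x by (simp add: H'_def algebra_simps)
    qed
    also have "\<dots> = H b - H x" using ac_eq[OF acH b] by simp
    also have "\<dots> \<le> (1 + c0) * \<phi> x"
    proof -
      have "0 < c0 * \<phi> x * exp (- (b - x))" using phi_pos[of x] by (simp add: c0_def)
      then have "H b \<le> 0" using phi_pos[of b] unfolding H_def by linarith
      then show ?thesis by (simp add: H_def algebra_simps)
    qed
    also have "\<dots> \<le> 3 * \<phi> x" using c0 phi_pos[of x] by (intro mult_right_mono) auto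
    finally show ?thesis .
  qed
  have lim: "((\<lambda>b. LINT t:{x..b}|lborel. (\<bar>t\<bar> + 1) * \<phi> t) \<longlongrightarrow> (LINT t:{x..}|lborel. (\<bar>t\<bar> + 1) * \<phi> t)) at_top"
    by (rule tendsto_set_lebesgue_integral_at_top[OF _ si]) simp
  show ?thesis
  proof (rule tendsto_upperbound[OF lim])
    show "\<forall>\<^sub>F b in at_top. (LINT t:{x..b}|lborel. (\<bar>t\<bar> + 1) * \<phi> t) \<le> 3 * \<phi> x"
      using eventually_ge_at_top[of x] by (rule eventually_mono) (rule bnd)
  qed simp
qed

lemma tail_neg:
  assumes x: "x \<le> 0"
  shows "(LINT t:{..x}|lborel. (\<bar>t\<bar> + 1) * \<phi> t) \<le> 3 * \<phi> x"
proof -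
  define c0 where "c0 = exp (1/2::real)"
  define H where "H t = \<phi> t + c0 * \<phi> x * exp (t - x)" for t
  define H' where "H' t = - t * \<phi> t + c0 * \<phi> x * exp (t - x)" for t
  have Hd: "(H has_real_derivative H' t) (at t)" for t
  proof -
    have 2: "((\<lambda>t. c0 * \<phi> x * exp (t - x)) has_real_derivative (c0 * \<phi> x * exp (t - x))) (at t)"
      by (auto intro!: derivative_eq_intros)
    have "((\<lambda>t. \<phi> t + c0 * \<phi> x * exp (t - x)) has_real_derivative
         (- t * \<phi> t + c0 * \<phi> x * exp (t - x))) (at t)"
      by (rule DERIV_add[OF phi_deriv 2])
    then show ?thesis by (simp add: H_def[abs_def] H'_def)
  qed
  have H'c: "continuous_on UNIV H'" unfolding H'_def[abs_def]
    by (intro continuous_intros phi_cont)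
  have acH: "ac_with_deriv H H'" by (rule ac_smooth[OF Hd H'c])
  have c0: "c0 \<le> 2" unfolding c0_def by (rule exp_half_le)
  have si: "set_integrable lborel {..x} (\<lambda>t. (\<bar>t\<bar> + 1) * \<phi> t)" by (rule si_of_int[OF g1_int]) simp
  have bnd: "(LINT t:{a..x}|lborel. (\<bar>t\<bar> + 1) * \<phi> t) \<le> 3 * \<phi> x" if a: "a \<le> x" for a
  proof -
    have "(LINT t:{a..x}|lborel. (\<bar>t\<bar> + 1) * \<phi> t) \<le> (LINT t:{a..x}|lborel. H' t)"
    proof (rule set_integral_mono)
      show "set_integrable lborel {a..x} (\<lambda>t. (\<bar>t\<bar> + 1) * \<phi> t)" by (rule si_of_int[OF g1_int]) simp
      show "set_integrable lborel {a..x} H'" using acH by (rule ac_int)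
      fix t assume t: "t \<in> {a..x}"
      have "\<phi> t \<le> c0 * \<phi> x * exp (t - x)" unfolding c0_def by (rule gauss_cmp_neg) (use t x in auto)
      moreover have "\<bar>t\<bar> = - t" using t x by simp
      ultimately show "(\<bar>t\<bar> + 1) * \<phi> t \<le> H' t" by (simp add: H'_def algebra_simps)
    qed
    also have "\<dots> = H x - H a" using ac_eq[OF acH a] by simp
    also have "\<dots> \<le> (1 + c0) * \<phi> x"
    proof -
      have "0 < c0 * \<phi> x * exp (a - x)" using phi_pos[of x] by (simp add: c0_def)
      then have "H a \<ge> 0" using phi_pos[of a] unfolding H_def by linarith
      then show ?thesis by (simp add: H_def algebra_simps)
    qed
    also have "\<dots> \<le> 3 * \<phi> x" using c0 phi_pos[of x] by (intro mult_right_mono) auto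
    finally show ?thesis .
  qed
  have lim: "((\<lambda>a. LINT t:{a..x}|lborel. (\<bar>t\<bar> + 1) * \<phi> t) \<longlongrightarrow> (LINT t:{..x}|lborel. (\<bar>t\<bar> + 1) * \<phi> t)) at_bot"
    by (rule tendsto_set_lebesgue_integral_at_bot[OF _ si]) simp
  show ?thesis
  proof (rule tendsto_upperbound[OF lim])
    show "\<forall>\<^sub>F a in at_bot. (LINT t:{a..x}|lborel. (\<bar>t\<bar> + 1) * \<phi> t) \<le> 3 * \<phi> x"
      using eventually_le_at_bot[of x] by (rule eventually_mono) (rule bnd)
  qed simp
qed


lemma lint_mono_subset:
  fixes f :: "real \<Rightarrow> real"
  assumes "integrable lborel f" "\<And>x. f x \<ge> 0" "A \<subseteq> B" "A \<in> sets borel" "B \<in> sets borel"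
  shows "(LINT x:A|lborel. f x) \<le> (LINT x:B|lborel. f x)"
  unfolding set_lebesgue_integral_def
proof (rule integral_mono)
  show "integrable lborel (\<lambda>x. indicator A x *\<^sub>R f x)" using si_of_int[OF assms(1,4)] by (simp add: set_integrable_def)
  show "integrable lborel (\<lambda>x. indicator B x *\<^sub>R f x)" using si_of_int[OF assms(1,5)] by (simp add: set_integrable_def)
  fix x show "indicator A x *\<^sub>R f x \<le> indicator B x *\<^sub>R f x"
    using assms(2,3) by (auto simp: indicator_def)
qed

lemma lint_Ioc_Icc:
  fixes f :: "real \<Rightarrow> real"
  assumes "f \<in> borel_measurable lborel"
  shows "(LINT x:{a<..b}|lborel. f x) = (LINT x:{a..b}|lborel. f x)"
  unfolding set_lebesgue_integral_def
proof (rule integral_cong_AE)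
  show "(\<lambda>x. indicator {a<..b} x *\<^sub>R f x) \<in> borel_measurable lborel" using assms by measurable
  show "(\<lambda>x. indicator {a..b} x *\<^sub>R f x) \<in> borel_measurable lborel" using assms by measurable
  show "AE x in lborel. indicator {a<..b} x *\<^sub>R f x = indicator {a..b} x *\<^sub>R f x"
    using AE_lborel_singleton[of a] by eventually_elim (auto simp: indicator_def)
qed

lemma lint_split_Ioi:
  fixes f :: "real \<Rightarrow> real"
  assumes f: "integrable lborel f" and ab: "a \<le> b"
  shows "(LINT x:{a<..}|lborel. f x) = (LINT x:{a<..b}|lborel. f x) + (LINT x:{b<..}|lborel. f x)"
proof -
  have e: "{a<..} = {a<..b} \<union> {b<..}" using ab by auto
  have "(LINT x:{a<..}|lborel. f x) = (LINT x:({a<..b} \<union> {b<..})|lborel. f x)" by (simp only: e)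
  also have "\<dots> = (LINT x:{a<..b}|lborel. f x) + (LINT x:{b<..}|lborel. f x)"
    by (rule set_integral_Un) (auto simp: si_of_int[OF f])
  finally show ?thesis .
qed

lemma lint_split_UNIV:
  fixes f :: "real \<Rightarrow> real"
  assumes f: "integrable lborel f"
  shows "integral\<^sup>L lborel f = (LINT x:{..a}|lborel. f x) + (LINT x:{a<..}|lborel. f x)"
proof -
  have e: "{..a} \<union> {a<..} = (UNIV :: real set)" by auto
  have "integral\<^sup>L lborel f = (LINT x:({..a} \<union> {a<..})|lborel. f x)"
    unfolding e by (simp add: set_lebesgue_integral_def)
  also have "\<dots> = (LINT x:{..a}|lborel. f x) + (LINT x:{a<..}|lborel. f x)"
    by (rule set_integral_Un) (auto simp: si_of_int[OF f])
  finally show ?thesis .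
qed

context fsetup
begin

definition d where "d x = p' x - std_normal_density' x"
definition s where "s x = sgn (d x)"
definition c where "c = integral\<^sup>L lborel (\<lambda>x. x * s x * \<phi> x)"
definition k where "k x = x * s x - c"
definition K where "K x = (LINT t:{x<..}|lborel. k t * \<phi> t)"
definition G where "G x = K x * E x"

lemma d_eq: "d x = p' x + x * \<phi> x" by (simp add: d_def std_normal_density'_def)

lemma d_m[measurable]: "d \<in> borel_measurable borel" unfolding d_eq[abs_def] by measurable
lemma s_m[measurable]: "s \<in> borel_measurable borel" unfolding s_def[abs_def] by measurable
lemma k_m[measurable]: "k \<in> borel_measurable borel" unfolding k_def[abs_def] by measurable

lemma s_abs: "\<bar>s x\<bar> \<le> 1" by (simp add: s_def sgn_real_def)

lemma xsphi_int: "integrable lborel (\<lambda>x. x * s x * \<phi> x)"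
proof (rule Bochner_Integration.integrable_bound[OF phi_absx_int])
  show "(\<lambda>x. x * s x * \<phi> x) \<in> borel_measurable lborel" by simp
  show "AE x in lborel. norm (x * s x * \<phi> x) \<le> norm (\<bar>x\<bar> * \<phi> x)"
  proof (rule AE_I2)
    fix x :: real
    have "\<bar>x\<bar> * \<bar>s x\<bar> * \<phi> x \<le> \<bar>x\<bar> * 1 * \<phi> x"
      using s_abs[of x] phi_pos[of x] by (intro mult_right_mono mult_left_mono) auto
    then show "norm (x * s x * \<phi> x) \<le> norm (\<bar>x\<bar> * \<phi> x)" using phi_pos[of x] by (simp add: abs_mult)
  qed
qed

lemma c_abs: "\<bar>c\<bar> \<le> 1"
proof -
  have "\<bar>c\<bar> \<le> integral\<^sup>L lborel (\<lambda>x. \<bar>x * s x * \<phi> x\<bar>)"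
    unfolding c_def using integral_abs_bound by blast
  also have "\<dots> \<le> integral\<^sup>L lborel (\<lambda>x. \<bar>x\<bar> * \<phi> x)"
  proof (rule integral_mono[OF _ phi_absx_int])
    show "integrable lborel (\<lambda>x. \<bar>x * s x * \<phi> x\<bar>)" using xsphi_int by simp
    fix x :: real
    have "\<bar>x\<bar> * \<bar>s x\<bar> * \<phi> x \<le> \<bar>x\<bar> * 1 * \<phi> x"
      using s_abs[of x] phi_pos[of x] by (intro mult_right_mono mult_left_mono) auto
    then show "\<bar>x * s x * \<phi> x\<bar> \<le> \<bar>x\<bar> * \<phi> x" using phi_pos[of x] by (simp add: abs_mult)
  qed
  also have "\<dots> \<le> 1" by (rule phi_absx_le)
  finally show ?thesis .
qed

lemma k_abs: "\<bar>k x\<bar> \<le> \<bar>x\<bar> + 1"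
proof -
  have "\<bar>x * s x\<bar> \<le> \<bar>x\<bar>" using s_abs[of x] mult_left_mono[of "\<bar>s x\<bar>" 1 "\<bar>x\<bar>"] by (simp add: abs_mult)
  then show ?thesis using c_abs unfolding k_def by linarith
qed

lemma int_bound_helper:
  fixes f g :: "real \<Rightarrow> real"
  assumes "integrable lborel g" "f \<in> borel_measurable lborel" "\<And>x. \<bar>f x\<bar> \<le> g x"
  shows "integrable lborel f"
  by (rule Bochner_Integration.integrable_bound[OF assms(1,2)]) (use assms(3) in \<open>auto intro!: AE_I2 order_trans[OF _ abs_ge_self]\<close>)

lemma kphi_le: "\<bar>k t * \<phi> t\<bar> \<le> (\<bar>t\<bar> + 1) * \<phi> t"
  using k_abs[of t] phi_pos[of t] by (simp add: abs_mult mult_right_mono)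

lemma kphi_int: "integrable lborel (\<lambda>t. k t * \<phi> t)"
  by (rule int_bound_helper[OF g1_int _ kphi_le]) simp

lemma kphi_total: "integral\<^sup>L lborel (\<lambda>t. k t * \<phi> t) = 0"
proof -
  have "integral\<^sup>L lborel (\<lambda>t. k t * \<phi> t) = integral\<^sup>L lborel (\<lambda>t. t * s t * \<phi> t - c * \<phi> t)"
    by (simp add: k_def algebra_simps)
  also have "\<dots> = c - c * integral\<^sup>L lborel \<phi>"
    using xsphi_int phi_int by (simp add: c_def)
  finally show ?thesis by (simp add: phi_total)
qed

lemma K_bound: "\<bar>K x\<bar> \<le> 3 * \<phi> x"
proof (cases "x \<ge> 0")
  case True
  have "\<bar>K x\<bar> \<le> (LINT t:{x<..}|lborel. \<bar>k t * \<phi> t\<bar>)"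
    unfolding K_def using set_integral_norm_bound[OF si_of_int[OF kphi_int, of "{x<..}"]] by simp
  also have "\<dots> \<le> (LINT t:{x<..}|lborel. (\<bar>t\<bar> + 1) * \<phi> t)"
    by (rule set_integral_mono) (auto simp: kphi_le intro!: si_of_int g1_int set_integrable_abs kphi_int)
  also have "\<dots> \<le> (LINT t:{x..}|lborel. (\<bar>t\<bar> + 1) * \<phi> t)"
    by (rule lint_mono_subset[OF g1_int]) (auto intro!: mult_nonneg_nonneg less_imp_le[OF phi_pos])
  also have "\<dots> \<le> 3 * \<phi> x" by (rule tail_pos[OF True])
  finally show ?thesis .
next
  case False
  have "K x = - (LINT t:{..x}|lborel. k t * \<phi> t)"
    using lint_split_UNIV[OF kphi_int, of x] kphi_total unfolding K_def by simp
  then have "\<bar>K x\<bar> \<le> (LINT t:{..x}|lborel. \<bar>k t * \<phi> t\<bar>)"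
    using set_integral_norm_bound[OF si_of_int[OF kphi_int, of "{..x}"]] by simp
  also have "\<dots> \<le> (LINT t:{..x}|lborel. (\<bar>t\<bar> + 1) * \<phi> t)"
    by (rule set_integral_mono) (auto simp: kphi_le intro!: si_of_int g1_int set_integrable_abs kphi_int)
  also have "\<dots> \<le> 3 * \<phi> x" by (rule tail_neg) (use False in simp)
  finally show ?thesis .
qed

lemma K_ac: "ac_with_deriv K (\<lambda>t. - (k t * \<phi> t))"
  unfolding ac_with_deriv_def
proof (intro conjI allI impI)
  fix a b :: real
  show "set_integrable lborel {a..b} (\<lambda>t. - (k t * \<phi> t))"
    by (rule si_of_int[OF Bochner_Integration.integrable_minus[OF kphi_int]]) simp
  assume ab: "a \<le> b"
  have "K a = (LINT t:{a<..b}|lborel. k t * \<phi> t) + K b"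
    unfolding K_def by (rule lint_split_Ioi[OF kphi_int ab])
  moreover have "(LINT t:{a<..b}|lborel. k t * \<phi> t) = (LINT t:{a..b}|lborel. k t * \<phi> t)"
    by (rule lint_Ioc_Icc) simp
  moreover have "(LINT t:{a..b}|lborel. - (k t * \<phi> t)) = - (LINT t:{a..b}|lborel. k t * \<phi> t)"
    by (rule set_integral_uminus[OF si_of_int[OF kphi_int]]) simp
  ultimately show "K b - K a = (LINT t:{a..b}|lborel. - (k t * \<phi> t))" by simp
qed

lemma ac_cong_deriv: "ac_with_deriv u u' \<Longrightarrow> (\<And>x. u' x = v' x) \<Longrightarrow> ac_with_deriv u v'"
proof -
  assume "ac_with_deriv u u'" "\<And>x. u' x = v' x"
  moreover then have "u' = v'" by auto
  ultimately show ?thesis by simp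
qed

lemma G_ac: "ac_with_deriv G (\<lambda>t. - k t + t * G t)"
proof -
  have fG: "(\<lambda>x. K x * E x) = G" by (auto simp: G_def)
  have "ac_with_deriv (\<lambda>x. K x * E x) (\<lambda>t. - k t + t * G t)"
  proof (rule ac_cong_deriv[OF ac_mult[OF K_ac E_ac]])
    fix x
    have "- (k x * \<phi> x) * E x = - k x" using E_phi[of x] by (simp add: algebra_simps)
    then show "- (k x * \<phi> x) * E x + K x * (x * E x) = - k x + x * G x" by (simp add: G_def algebra_simps)
  qed
  then show ?thesis by (simp only: fG)
qed

lemma E_pos: "E x > 0" by (simp add: E_def)

lemma G_bound: "\<bar>G x\<bar> \<le> 3"
proof -
  have "\<bar>G x\<bar> = \<bar>K x\<bar> * E x" using E_pos[of x] by (simp add: G_def abs_mult)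
  also have "\<dots> \<le> 3 * \<phi> x * E x" using K_bound[of x] E_pos[of x] by (intro mult_right_mono) auto
  also have "\<dots> = 3" using E_phi[of x] by (simp add: algebra_simps)
  finally show ?thesis .
qed

lemma G_m[measurable]: "G \<in> borel_measurable borel"
  using ac_cont_on[OF G_ac] by (simp add: borel_measurable_continuous_onI)

lemma kp_int: "integrable lborel (\<lambda>x. k x * p x)"
proof (rule int_bound_helper[where g="\<lambda>x. \<bar>x * p x\<bar> + p x"])
  show "integrable lborel (\<lambda>x. \<bar>x * p x\<bar> + p x)" using mean_int dens_int by auto
  show "(\<lambda>x. k x * p x) \<in> borel_measurable lborel" by simp
  fix x
  have "\<bar>k x * p x\<bar> \<le> (\<bar>x\<bar> + 1) * p x" using k_abs[of x] nonneg[of x] by (simp add: abs_mult mult_right_mono)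
  then show "\<bar>k x * p x\<bar> \<le> \<bar>x * p x\<bar> + p x" using nonneg[of x] by (simp add: abs_mult algebra_simps)
qed

lemma wG_int: "integrable lborel (\<lambda>x. w x * G x)"
proof (rule int_bound_helper[where g="\<lambda>x. 3 * \<bar>w x\<bar>"])
  show "integrable lborel (\<lambda>x. 3 * \<bar>w x\<bar>)" using int_w by auto
  show "(\<lambda>x. w x * G x) \<in> borel_measurable lborel" by simp
  fix x show "\<bar>w x * G x\<bar> \<le> 3 * \<bar>w x\<bar>"
    using G_bound[of x] by (simp add: abs_mult mult.commute mult_right_mono)
qed

lemma kp_eq: "integral\<^sup>L lborel (\<lambda>x. k x * p x) = integral\<^sup>L lborel (\<lambda>x. w x * G x)"
proof -
  have acpG: "ac_with_deriv (\<lambda>x. p x * G x) (\<lambda>x. w x * G x - k x * p x)"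
    by (rule ac_cong_deriv[OF ac_mult[OF ac G_ac]]) (simp add: w_def algebra_simps)
  have i: "integrable lborel (\<lambda>x. w x * G x - k x * p x)"
    by (intro Bochner_Integration.integrable_diff wG_int kp_int)
  have bnd: "\<bar>p x * G x\<bar> \<le> 3 * p x" for x
    using G_bound[of x] nonneg[of x] by (simp add: abs_mult mult_left_mono mult.commute)
  have lt: "((\<lambda>x. p x * G x) \<longlongrightarrow> 0) at_top"
    by (rule Lim_null_comparison[where g="\<lambda>x. 3 * p x"]) (use bnd p_lim(1) in \<open>auto intro: tendsto_mult_right_zero\<close>)
  have lb: "((\<lambda>x. p x * G x) \<longlongrightarrow> 0) at_bot"
    by (rule Lim_null_comparison[where g="\<lambda>x. 3 * p x"]) (use bnd p_lim(2) in \<open>auto intro: tendsto_mult_right_zero\<close>)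
  have "integral\<^sup>L lborel (\<lambda>x. w x * G x - k x * p x) = 0"
    by (rule ac_integral_zero[OF acpG i lt lb])
  then show ?thesis using wG_int kp_int by simp
qed

lemma d_int: "integrable lborel d"
proof -
  have "integrable lborel (\<lambda>x. p' x + x * \<phi> x)" by (intro Bochner_Integration.integrable_add int_p' phi_x_int)
  then show ?thesis by (simp add: d_eq[abs_def])
qed

lemma sw_int: "integrable lborel (\<lambda>x. s x * w x)"
proof (rule int_bound_helper[where g="\<lambda>x. \<bar>w x\<bar>"])
  show "integrable lborel (\<lambda>x. \<bar>w x\<bar>)" using int_w by auto
  show "(\<lambda>x. s x * w x) \<in> borel_measurable lborel" by simp
  fix x show "\<bar>s x * w x\<bar> \<le> \<bar>w x\<bar>"
    using s_abs[of x] mult_right_mono[of "\<bar>s x\<bar>" 1 "\<bar>w x\<bar>"] by (simp add: abs_mult)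
qed

lemma tv_bound: "integral\<^sup>L lborel (\<lambda>x. \<bar>d x\<bar>) \<le> 4 * integral\<^sup>L lborel (\<lambda>x. \<bar>w x\<bar>)"
proof -
  have abs_d: "\<bar>d x\<bar> = s x * w x - (k x * p x + c * p x) + x * s x * \<phi> x" for x
  proof -
    have 1: "\<bar>d x\<bar> = s x * d x" by (simp add: s_def sgn_real_def)
    have 2: "d x = w x - x * p x + x * \<phi> x" by (simp add: d_eq w_def)
    have 3: "\<bar>d x\<bar> = s x * (w x - x * p x + x * \<phi> x)" using 1 2 by metis
    show ?thesis unfolding 3 by (simp add: k_def algebra_simps)
  qed
  have icp: "integrable lborel (\<lambda>x. k x * p x + c * p x)"
    by (intro Bochner_Integration.integrable_add kp_int Bochner_Integration.integrable_mult_right dens_int)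
  have "integral\<^sup>L lborel (\<lambda>x. \<bar>d x\<bar>) = integral\<^sup>L lborel (\<lambda>x. s x * w x - (k x * p x + c * p x) + x * s x * \<phi> x)"
    by (simp add: abs_d)
  also have "\<dots> = integral\<^sup>L lborel (\<lambda>x. s x * w x) - (integral\<^sup>L lborel (\<lambda>x. k x * p x) + c * integral\<^sup>L lborel p) + c"
    using sw_int icp xsphi_int kp_int dens_int by (simp add: c_def)
  also have "\<dots> = integral\<^sup>L lborel (\<lambda>x. s x * w x) - integral\<^sup>L lborel (\<lambda>x. w x * G x)"
    by (simp add: dens_total kp_eq)
  also have "\<dots> = integral\<^sup>L lborel (\<lambda>x. s x * w x - w x * G x)"
    using sw_int wG_int by simp
  also have "\<dots> \<le> integral\<^sup>L lborel (\<lambda>x. 4 * \<bar>w x\<bar>)"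
  proof (rule integral_mono)
    show "integrable lborel (\<lambda>x. s x * w x - w x * G x)" using sw_int wG_int by simp
    show "integrable lborel (\<lambda>x. 4 * \<bar>w x\<bar>)" using int_w by auto
    fix x
    have "\<bar>s x * w x\<bar> \<le> \<bar>w x\<bar>"
      using s_abs[of x] mult_right_mono[of "\<bar>s x\<bar>" 1 "\<bar>w x\<bar>"] by (simp add: abs_mult)
    moreover have "\<bar>w x * G x\<bar> \<le> 3 * \<bar>w x\<bar>"
      using G_bound[of x] by (simp add: abs_mult mult.commute mult_right_mono)
    ultimately show "s x * w x - w x * G x \<le> 4 * \<bar>w x\<bar>" by linarith
  qed
  also have "\<dots> = 4 * integral\<^sup>L lborel (\<lambda>x. \<bar>w x\<bar>)" by simp
  finally show ?thesis .
qed

lemma main_result: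
  "integrable lborel (\<lambda>x. p' x - std_normal_density' x) \<and>
   tv_norm (\<lambda>x. p' x - std_normal_density' x) \<le> 4 * sqrt (fisher_info p p' - 1)"
proof
  show "integrable lborel (\<lambda>x. p' x - std_normal_density' x)" using d_int by (simp add: d_def[abs_def])
  have "tv_norm (\<lambda>x. p' x - std_normal_density' x) = integral\<^sup>L lborel (\<lambda>x. \<bar>d x\<bar>)"
    by (simp add: tv_norm_def d_def)
  also have "\<dots> \<le> 4 * integral\<^sup>L lborel (\<lambda>x. \<bar>w x\<bar>)" by (rule tv_bound)
  also have "\<dots> \<le> 4 * sqrt (fisher_info p p' - 1)" using w_l1 by simp
  finally show "tv_norm (\<lambda>x. p' x - std_normal_density' x) \<le> 4 * sqrt (fisher_info p p' - 1)" .
qed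

end

theorem proposition2p4:
  fixes p p' :: "real \<Rightarrow> real"
  assumes nonneg: "\<And>x. p x \<ge> 0"
    and dens_int: "integrable lborel p"
    and dens_total: "(LINT x|lborel. p x) = 1"
    and ac: "ac_with_deriv p p'"
    and mean_int: "integrable lborel (\<lambda>x. x * p x)"
    and mean0: "(LINT x|lborel. x * p x) = 0"
    and var_int: "integrable lborel (\<lambda>x. x\<^sup>2 * p x)"
    and var1: "(LINT x|lborel. x\<^sup>2 * p x) = 1"
    and fisher: "finite_fisher_info p p'"
  shows "integrable lborel (\<lambda>x. p' x - std_normal_density' x) \<and>
         tv_norm (\<lambda>x. p' x - std_normal_density' x) \<le> 4 * sqrt (fisher_info p p' - 1)"
proof -
  interpret fsetup p p' by (unfold_locales; fact assms)
  show ?thesis by (rule main_result)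
qed


end
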